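(* Let $P$ be an Eulerian poset of rank $d$ and $P^*$ its dual Eulerian poset. Then $$B(P;u,v)=(-u)^dB(P^*;u^{-1},v).$$
   Context: An Eulerian poset is a finite poset $P$ with least element $\hat0$, greatest element $\hat1$, all maximal chains of the same length $d$ (the rank), rank function $\rho(x)$ = length of any saturated chain from $\hat0$ to $x$, such that the Möbius function satisfies $\mu_P(x,y)=(-1)^{\rho(y)-\rho(x)}$ for $x\le y$. Intervals $[x,y]=\{z:x\le z\le y\}$ are Eulerian of rank $\rho(y)-\rho(x)$; the dual poset $P^*$ (reversed order) is Eulerian of rank $d$ with rank function $d-\rho$. Define $G(P,t),H(P,t)\in\mathbb{Z}[t]$ recursively: $G=H=1$ if $d=0$; for $d>0$, $H(P,t)=\sum_{\hat0<x\le\hat1}(t-1)^{\rho(x)-1}G([x,\hat1],t)$ and $G(P,t)=\tau_{<d/2}((1-t)H(P,t))$, where $\tau_{<r}(\sum a_it^i)=\sum_{i<r}a_it^i$. Define $B(P;u,v)\in\mathbb{Z}[u,v]$ recursively: $B(P;u,v)=1$ if $d=0$, and for $d>0$ by $\sum_{\hat0\le x\le\hat1}B([\hat0,x];u,v)u^{d-\rho(x)}G([x,\hat1],u^{-1}v)=G(P,uv)$ (the term $x=\hat1$ being $B(P;u,v)$). *)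

theory Defs
  imports Complex_Main "HOL-Computational_Algebra.Polynomial"
begin

text \<open>A finite poset is given by a carrier set S and an order relation le on it.
  Intervals and the dual poset are again of this form (same element type).\<close>

definition finite_poset :: "'a set \<Rightarrow> ('a \<Rightarrow> 'a \<Rightarrow> bool) \<Rightarrow> bool" where
  "finite_poset S le \<longleftrightarrow> finite S \<and>
     (\<forall>x\<in>S. le x x) \<and>
     (\<forall>x\<in>S. \<forall>y\<in>S. le x y \<and> le y x \<longrightarrow> x = y) \<and>
     (\<forall>x\<in>S. \<forall>y\<in>S. \<forall>z\<in>S. le x y \<and> le y z \<longrightarrow> le x z)"

definition dual_rel :: "('a \<Rightarrow> 'a \<Rightarrow> bool) \<Rightarrow> 'a \<Rightarrow> 'a \<Rightarrow> bool" where
  "dual_rel le = (\<lambda>x y. le y x)"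

definition interval :: "'a set \<Rightarrow> ('a \<Rightarrow> 'a \<Rightarrow> bool) \<Rightarrow> 'a \<Rightarrow> 'a \<Rightarrow> 'a set" where
  "interval S le a b = {z \<in> S. le a z \<and> le z b}"

definition pbot :: "'a set \<Rightarrow> ('a \<Rightarrow> 'a \<Rightarrow> bool) \<Rightarrow> 'a" where
  "pbot S le = (THE x. x \<in> S \<and> (\<forall>y\<in>S. le x y))"

definition ptop :: "'a set \<Rightarrow> ('a \<Rightarrow> 'a \<Rightarrow> bool) \<Rightarrow> 'a" where
  "ptop S le = (THE x. x \<in> S \<and> (\<forall>y\<in>S. le y x))"

definition is_chain :: "'a set \<Rightarrow> ('a \<Rightarrow> 'a \<Rightarrow> bool) \<Rightarrow> 'a set \<Rightarrow> bool" where
  "is_chain S le C \<longleftrightarrow> C \<subseteq> S \<and> (\<forall>a\<in>C. \<forall>b\<in>C. le a b \<or> le b a)"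

definition is_maxchain :: "'a set \<Rightarrow> ('a \<Rightarrow> 'a \<Rightarrow> bool) \<Rightarrow> 'a set \<Rightarrow> bool" where
  "is_maxchain S le C \<longleftrightarrow> is_chain S le C \<and> (\<forall>D. is_chain S le D \<and> C \<subseteq> D \<longrightarrow> D = C)"

definition rho :: "'a set \<Rightarrow> ('a \<Rightarrow> 'a \<Rightarrow> bool) \<Rightarrow> 'a \<Rightarrow> nat" where
  "rho S le x = card (SOME C. is_maxchain (interval S le (pbot S le) x) le C) - 1"

definition prank :: "'a set \<Rightarrow> ('a \<Rightarrow> 'a \<Rightarrow> bool) \<Rightarrow> nat" where
  "prank S le = rho S le (ptop S le)"

text \<open>Moebius function, by the usual recursion
  mu(x,x)=1, mu(x,y) = - sum over x<=z<y of mu(x,z); the fuel (card S) exceeds the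
  length of every chain.\<close>
fun mob_aux :: "nat \<Rightarrow> 'a set \<Rightarrow> ('a \<Rightarrow> 'a \<Rightarrow> bool) \<Rightarrow> 'a \<Rightarrow> 'a \<Rightarrow> int" where
  "mob_aux 0 S le x y = (if x = y then 1 else 0)"
| "mob_aux (Suc n) S le x y =
     (if x = y then 1
      else if le x y then - (\<Sum>z\<in>{z\<in>S. le x z \<and> le z y \<and> z \<noteq> y}. mob_aux n S le x z)
      else 0)"

definition mobius :: "'a set \<Rightarrow> ('a \<Rightarrow> 'a \<Rightarrow> bool) \<Rightarrow> 'a \<Rightarrow> 'a \<Rightarrow> int" where
  "mobius S le x y = mob_aux (card S) S le x y"

definition eulerian :: "'a set \<Rightarrow> ('a \<Rightarrow> 'a \<Rightarrow> bool) \<Rightarrow> bool" where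
  "eulerian S le \<longleftrightarrow> finite_poset S le \<and>
     (\<exists>z\<in>S. \<forall>y\<in>S. le z y) \<and>
     (\<exists>z\<in>S. \<forall>y\<in>S. le y z) \<and>
     (\<forall>C D. is_maxchain S le C \<and> is_maxchain S le D \<longrightarrow> card C = card D) \<and>
     (\<forall>x\<in>S. \<forall>y\<in>S. le x y \<longrightarrow> mobius S le x y = (-1) ^ (rho S le y - rho S le x))"

text \<open>Truncation tau_{<d/2}: keep the coefficients a_i with i < d/2, i.e. 2i < d.\<close>
definition tau_half :: "nat \<Rightarrow> int poly \<Rightarrow> int poly" where
  "tau_half d p = (\<Sum>i\<in>{i. 2 * i < d}. monom (coeff p i) i)"

definition H_sum :: "('a set \<Rightarrow> int poly) \<Rightarrow> 'a set \<Rightarrow> ('a \<Rightarrow> 'a \<Rightarrow> bool) \<Rightarrow> int poly" where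
  "H_sum g S le = (\<Sum>x\<in>{x\<in>S. x \<noteq> pbot S le}.
       [:-1, 1:] ^ (rho S le x - 1) * g (interval S le x (ptop S le)))"

primrec G_aux :: "nat \<Rightarrow> 'a set \<Rightarrow> ('a \<Rightarrow> 'a \<Rightarrow> bool) \<Rightarrow> int poly" where
  "G_aux 0 S le = 1"
| "G_aux (Suc n) S le =
     (if prank S le = 0 then 1
      else tau_half (prank S le) ([:1, -1:] * H_sum (\<lambda>T. G_aux n T le) S le))"

definition G_poly :: "'a set \<Rightarrow> ('a \<Rightarrow> 'a \<Rightarrow> bool) \<Rightarrow> int poly" where
  "G_poly S le = G_aux (card S) S le"

definition H_poly :: "'a set \<Rightarrow> ('a \<Rightarrow> 'a \<Rightarrow> bool) \<Rightarrow> int poly" where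
  "H_poly S le = (if prank S le = 0 then 1 else H_sum (\<lambda>T. G_poly T le) S le)"

text \<open>B(P;u,v), represented by its values at real u, v.  The recursion
  sum_{x} B([0,x];u,v) u^(d-rho x) G([x,1], v/u) = G(P,uv) is solved for the x = 1 term.
  It is the polynomial B(P;u,v) evaluated at (u,v) whenever u \<noteq> 0.\<close>
primrec B_aux :: "nat \<Rightarrow> 'a set \<Rightarrow> ('a \<Rightarrow> 'a \<Rightarrow> bool) \<Rightarrow> real \<Rightarrow> real \<Rightarrow> real" where
  "B_aux 0 S le u v = 1"
| "B_aux (Suc n) S le u v =
     (if prank S le = 0 then 1
      else poly (map_poly of_int (G_poly S le)) (u * v)
         - (\<Sum>x\<in>{x\<in>S. x \<noteq> ptop S le}.
              B_aux n (interval S le (pbot S le) x) le u v * u ^ (prank S le - rho S le x)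
              * poly (map_poly of_int (G_poly (interval S le x (ptop S le)) le)) (v / u)))"

definition B_val :: "'a set \<Rightarrow> ('a \<Rightarrow> 'a \<Rightarrow> bool) \<Rightarrow> real \<Rightarrow> real \<Rightarrow> real" where
  "B_val S le u v = B_aux (card S) S le u v"

end

theory Submission
  imports Defs
begin


lemma sum_filter_if: "finite S \<Longrightarrow> (\<Sum>z\<in>{z\<in>S. P z}. \<Sum>w\<in>{w\<in>S. Q z w}. F z w)
      = (\<Sum>z\<in>S. \<Sum>w\<in>S. if P z \<and> Q z w then F z w else 0)"
proof -
  assume fin: "finite S"
  have "(\<Sum>z\<in>{z\<in>S. P z}. \<Sum>w\<in>{w\<in>S. Q z w}. F z w)
       = (\<Sum>z\<in>S. if P z then (\<Sum>w\<in>{w\<in>S. Q z w}. F z w) else 0)"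
    using fin by (rule sum.inter_filter)
  also have "\<dots> = (\<Sum>z\<in>S. \<Sum>w\<in>S. if P z \<and> Q z w then F z w else 0)"
  proof (rule sum.cong[OF refl])
    fix z
    show "(if P z then (\<Sum>w\<in>{w\<in>S. Q z w}. F z w) else 0) = (\<Sum>w\<in>S. if P z \<and> Q z w then F z w else 0)"
      using fin by (cases "P z") (simp_all add: sum.inter_filter)
  qed
  finally show ?thesis .
qed

lemma sum_swap_cond:
  assumes "finite S"
    and "\<And>z w. z \<in> S \<Longrightarrow> w \<in> S \<Longrightarrow> (P z \<and> Q z w) = (P' w \<and> Q' w z)"
  shows "(\<Sum>z\<in>{z\<in>S. P z}. \<Sum>w\<in>{w\<in>S. Q z w}. F z w)
       = (\<Sum>w\<in>{w\<in>S. P' w}. \<Sum>z\<in>{z\<in>S. Q' w z}. F z w)"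
proof -
  have "(\<Sum>z\<in>{z\<in>S. P z}. \<Sum>w\<in>{w\<in>S. Q z w}. F z w)
      = (\<Sum>z\<in>S. \<Sum>w\<in>S. if P z \<and> Q z w then F z w else 0)"
    using assms(1) by (rule sum_filter_if)
  also have "\<dots> = (\<Sum>w\<in>S. \<Sum>z\<in>S. if P z \<and> Q z w then F z w else 0)"
    by (rule sum.swap)
  also have "\<dots> = (\<Sum>w\<in>S. \<Sum>z\<in>S. if P' w \<and> Q' w z then F z w else 0)"
    using assms(2) by (intro sum.cong refl) auto
  also have "\<dots> = (\<Sum>w\<in>{w\<in>S. P' w}. \<Sum>z\<in>{z\<in>S. Q' w z}. F z w)"
    using assms(1) by (rule sum_filter_if[symmetric])
  finally show ?thesis .
qed
definition rev_poly :: "nat \<Rightarrow> int poly \<Rightarrow> int poly" where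
  "rev_poly d p = (\<Sum>i\<le>d. monom (coeff p i) (d - i))"

lemma coeff_rev_poly: "coeff (rev_poly d p) n = (if n \<le> d then coeff p (d - n) else 0)"
proof -
  have "coeff (rev_poly d p) n = (\<Sum>i\<le>d. if d - i = n then coeff p i else 0)"
    by (simp add: rev_poly_def coeff_sum coeff_monom)
  also have "\<dots> = (\<Sum>i\<le>d. if i = d - n \<and> n \<le> d then coeff p i else 0)"
    by (intro sum.cong refl) auto
  also have "\<dots> = (if n \<le> d then coeff p (d - n) else 0)"
    by (cases "n \<le> d") (simp_all add: sum.delta')
  finally show ?thesis .
qed

lemma rev_poly_add: "rev_poly d (p + q) = rev_poly d p + rev_poly d q"
  by (rule poly_eqI) (simp add: coeff_rev_poly)

lemma rev_poly_0[simp]: "rev_poly d 0 = 0"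
  by (rule poly_eqI) (simp add: coeff_rev_poly)

lemma rev_poly_uminus: "rev_poly d (- p) = - rev_poly d p"
  by (rule poly_eqI) (simp add: coeff_rev_poly)

lemma rev_poly_smult: "rev_poly d (smult c p) = smult c (rev_poly d p)"
  by (rule poly_eqI) (simp add: coeff_rev_poly)

lemma rev_poly_sum: "rev_poly d (sum f A) = (\<Sum>x\<in>A. rev_poly d (f x))"
  by (induction A rule: infinite_finite_induct) (simp_all add: rev_poly_add)

lemma rev_poly_reflect:
  assumes "degree p \<le> d"
  shows "rev_poly d p = monom 1 (d - degree p) * reflect_poly p"
proof (rule poly_eqI)
  fix n
  show "coeff (rev_poly d p) n = coeff (monom 1 (d - degree p) * reflect_poly p) n"
    using assms by (auto simp: coeff_rev_poly coeff_monom_mult coeff_reflect_poly intro!: coeff_eq_0)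
qed

lemma rev_poly_mult:
  assumes "degree p \<le> a" "degree q \<le> b"
  shows "rev_poly (a + b) (p * q) = rev_poly a p * rev_poly b q"
proof (cases "p = 0 \<or> q = 0")
  case True
  then show ?thesis by auto
next
  case False
  then have dm: "degree (p * q) = degree p + degree q" by (simp add: degree_mult_eq)
  have "rev_poly (a + b) (p * q) = monom 1 (a + b - degree (p * q)) * reflect_poly (p * q)"
    using assms dm by (intro rev_poly_reflect) simp
  also have "\<dots> = (monom 1 (a - degree p) * reflect_poly p) * (monom 1 (b - degree q) * reflect_poly q)"
    using assms dm by (simp add: reflect_poly_mult mult_monom algebra_simps)
  also have "\<dots> = rev_poly a p * rev_poly b q"
    using assms by (simp add: rev_poly_reflect)
  finally show ?thesis .
qed

lemma rev_poly_kappa: "rev_poly k ([:-1, 1:] ^ k) = [:1, -1:] ^ k"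
proof (induction k)
  case 0
  then show ?case by (rule poly_eqI) (simp add: coeff_rev_poly coeff_1)
next
  case (Suc k)
  have d1: "degree ([:-1, 1:] ^ k :: int poly) \<le> k"
    using degree_power_le[of "[:-1,1:]::int poly" k] by simp
  have "rev_poly (k + 1) ([:-1, 1:] ^ k * [:-1, 1:]) = rev_poly k ([:-1, 1:] ^ k) * rev_poly 1 [:-1, 1:]"
    by (rule rev_poly_mult[OF d1]) simp
  moreover have "rev_poly 1 [:-1, 1:] = [:1, -1::int:]"
    by (rule poly_eqI) (auto simp: coeff_rev_poly coeff_pCons split: nat.split)
  ultimately show ?case using Suc by (simp add: power_Suc2)
qed

lemma coeff_tau_half: "coeff (tau_half d p) n = (if 2 * n < d then coeff p n else 0)"
proof -
  have fin: "finite {i::nat. 2 * i < d}"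
    by (rule finite_subset[of _ "{..<d}"]) auto
  have "coeff (tau_half d p) n = (\<Sum>i\<in>{i. 2 * i < d}. if i = n then coeff p i else 0)"
    by (simp add: tau_half_def coeff_sum coeff_monom eq_commute)
  also have "\<dots> = (if 2 * n < d then coeff p n else 0)"
    using fin by (simp add: sum.delta')
  finally show ?thesis .
qed

lemma tau_rev:
  assumes "degree p \<le> r" "rev_poly r p = - p"
  shows "rev_poly r (tau_half r p) = tau_half r p - p"
proof (rule poly_eqI)
  fix n
  have A: "coeff p (r - k) = - coeff p k" if "k \<le> r" for k
    using arg_cong[OF assms(2), of "\<lambda>q. coeff q k"] that by (simp add: coeff_rev_poly)
  have Z: "coeff p k = 0" if "k > r" for k
    using assms(1) that by (intro coeff_eq_0) simp
  show "coeff (rev_poly r (tau_half r p)) n = coeff (tau_half r p - p) n"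
  proof (cases "n \<le> r")
    case True
    show ?thesis
    proof (cases "2 * n < r")
      case True
      then show ?thesis using \<open>n \<le> r\<close> by (simp add: coeff_rev_poly coeff_tau_half)
    next
      case False
      show ?thesis
      proof (cases "2 * n = r")
        case True
        then have "r - n = n" by simp
        then have "coeff p n = 0" using A[OF \<open>n \<le> r\<close>] by simp
        then show ?thesis using True \<open>n \<le> r\<close> by (simp add: coeff_rev_poly coeff_tau_half)
      next
        case False
        then have "2 * (r - n) < r" using \<open>\<not> 2 * n < r\<close> \<open>n \<le> r\<close> by simp
        then show ?thesis using \<open>\<not> 2 * n < r\<close> \<open>n \<le> r\<close> A[OF \<open>n \<le> r\<close>]
          by (simp add: coeff_rev_poly coeff_tau_half)
      qed
    qed
  next
    case False
    then show ?thesis using Z[of n] by (simp add: coeff_rev_poly coeff_tau_half)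
  qed
qed

lemma rev_fixed_zero:
  assumes "rev_poly r m = m" "2 * degree m < r"
  shows "m = 0"
proof (rule ccontr)
  assume "m \<noteq> 0"
  let ?k = "degree m"
  have "coeff m ?k \<noteq> 0" using \<open>m \<noteq> 0\<close> by simp
  moreover have "coeff m ?k = coeff (rev_poly r m) ?k" using assms(1) by simp
  moreover have "coeff (rev_poly r m) ?k = coeff m (r - ?k)"
    using assms(2) by (simp add: coeff_rev_poly)
  moreover have "coeff m (r - ?k) = 0" using assms(2) by (intro coeff_eq_0) simp
  ultimately show False by simp
qed

definition ev :: "real \<Rightarrow> int poly \<Rightarrow> real" where
  "ev t p = poly (map_poly of_int p) t"

lemma mp_add: "map_poly (of_int :: int \<Rightarrow> real) (p + q) = map_poly of_int p + map_poly of_int q"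
  by (rule poly_eqI) (simp add: coeff_map_poly)

lemma mp_mult: "map_poly (of_int :: int \<Rightarrow> real) (p * q) = map_poly of_int p * map_poly of_int q"
  by (rule poly_eqI) (simp add: coeff_map_poly coeff_mult)

lemma mp_uminus: "map_poly (of_int :: int \<Rightarrow> real) (- p) = - map_poly of_int p"
  by (rule poly_eqI) (simp add: coeff_map_poly)

lemma mp_smult: "map_poly (of_int :: int \<Rightarrow> real) (smult c p) = smult (of_int c) (map_poly of_int p)"
  by (rule poly_eqI) (simp add: coeff_map_poly)

lemma ev_add: "ev t (p + q) = ev t p + ev t q"
  by (simp add: ev_def mp_add)

lemma ev_mult: "ev t (p * q) = ev t p * ev t q"
  by (simp add: ev_def mp_mult)

lemma ev_uminus: "ev t (- p) = - ev t p"
  by (simp add: ev_def mp_uminus)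

lemma ev_smult: "ev t (smult c p) = of_int c * ev t p"
  by (simp add: ev_def mp_smult)

lemma ev_0[simp]: "ev t 0 = 0" and ev_1[simp]: "ev t 1 = 1"
  by (simp_all add: ev_def)

lemma ev_sum: "ev t (sum f A) = (\<Sum>x\<in>A. ev t (f x))"
  by (induction A rule: infinite_finite_induct) (simp_all add: ev_add)



lemma chain_ext:
  assumes "finite T" "is_chain T le C"
  shows "\<exists>D. is_maxchain T le D \<and> C \<subseteq> D"
proof -
  let ?X = "{D. is_chain T le D \<and> C \<subseteq> D}"
  have finX: "finite ?X"
    by (rule finite_subset[of _ "Pow T"]) (auto simp: is_chain_def assms(1))
  have "C \<in> ?X" using assms by auto
  then have ne: "card ` ?X \<noteq> {}" by auto
  let ?m = "Max (card ` ?X)"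
  have "?m \<in> card ` ?X" using finX ne by (intro Max_in) auto
  then obtain D where D: "D \<in> ?X" "card D = ?m" by auto
  have "is_maxchain T le D"
    unfolding is_maxchain_def
  proof (intro conjI allI impI)
    show "is_chain T le D" using D by auto
    fix D' assume H: "is_chain T le D' \<and> D \<subseteq> D'"
    then have "D' \<in> ?X" using D by auto
    then have "card D' \<le> card D" using finX D by (simp add: Max_ge)
    moreover have "finite D'" using H assms(1) by (auto simp: is_chain_def intro: finite_subset)
    moreover have "card D \<le> card D'" using H \<open>finite D'\<close> by (intro card_mono) auto
    ultimately show "D' = D" using H by (metis card_subset_eq le_antisym)
  qed
  then show ?thesis using D by auto
qed

lemma maxchain_ex: "finite T \<Longrightarrow> \<exists>D. is_maxchain T le D"
  using chain_ext[of T le "{}"] by (auto simp: is_chain_def)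

definition Lr :: "'a set \<Rightarrow> ('a \<Rightarrow> 'a \<Rightarrow> bool) \<Rightarrow> 'a \<Rightarrow> 'a \<Rightarrow> nat" where
  "Lr S le a b = card (SOME C. is_maxchain (interval S le a b) le C) - 1"

lemma is_chain_dual: "is_chain T (dual_rel le) C = is_chain T le C"
  by (auto simp: is_chain_def dual_rel_def)

lemma is_maxchain_dual: "is_maxchain T (dual_rel le) C = is_maxchain T le C"
  by (simp add: is_maxchain_def is_chain_dual)

lemma interval_dual: "interval S (dual_rel le) a b = interval S le b a"
  by (auto simp: interval_def dual_rel_def)

lemma Lr_dual: "Lr S (dual_rel le) a b = Lr S le b a"
  by (simp add: Lr_def interval_dual is_maxchain_dual)

lemma pbot_dual: "pbot S (dual_rel le) = ptop S le"
  by (simp add: pbot_def ptop_def dual_rel_def)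

lemma ptop_dual: "ptop S (dual_rel le) = pbot S le"
  by (simp add: pbot_def ptop_def dual_rel_def)

lemma mem_interval: "z \<in> interval S le a b \<longleftrightarrow> z \<in> S \<and> le a z \<and> le z b"
  by (simp add: interval_def)

locale gp =
  fixes S :: "'a set" and le :: "'a \<Rightarrow> 'a \<Rightarrow> bool"
  assumes fp: "finite_poset S le"
    and ex_bot: "\<exists>z\<in>S. \<forall>y\<in>S. le z y"
    and ex_top: "\<exists>z\<in>S. \<forall>y\<in>S. le y z"
    and mc: "\<And>C D. is_maxchain S le C \<Longrightarrow> is_maxchain S le D \<Longrightarrow> card C = card D"
begin

abbreviation I where "I a b \<equiv> interval S le a b"

lemma finS: "finite S" using fp unfolding finite_poset_def by blast
lemma prefl: "x \<in> S \<Longrightarrow> le x x" using fp unfolding finite_poset_def by blast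
lemma pantis: "x \<in> S \<Longrightarrow> y \<in> S \<Longrightarrow> le x y \<Longrightarrow> le y x \<Longrightarrow> x = y"
  using fp unfolding finite_poset_def by blast
lemma ptrans: "x \<in> S \<Longrightarrow> y \<in> S \<Longrightarrow> z \<in> S \<Longrightarrow> le x y \<Longrightarrow> le y z \<Longrightarrow> le x z"
  using fp unfolding finite_poset_def by blast

lemma zero: "pbot S le \<in> S \<and> (\<forall>y\<in>S. le (pbot S le) y)"
proof -
  obtain z where z: "z \<in> S" "\<forall>y\<in>S. le z y" using ex_bot by auto
  have "pbot S le = z" unfolding pbot_def
    by (rule the_equality) (use z pantis in auto)
  then show ?thesis using z by simp
qed

lemma one: "ptop S le \<in> S \<and> (\<forall>y\<in>S. le y (ptop S le))"
proof -
  obtain z where z: "z \<in> S" "\<forall>y\<in>S. le y z" using ex_top by auto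
  have "ptop S le = z" unfolding ptop_def
    by (rule the_equality) (use z pantis in auto)
  then show ?thesis using z by simp
qed

lemma finI: "finite (I a b)"
  using finS by (simp add: interval_def)

lemma I_sub: "I a b \<subseteq> S" by (auto simp: interval_def)

lemma I_S: "I (pbot S le) (ptop S le) = S"
  using zero one by (auto simp: interval_def)

lemma mc_ends:
  assumes "a \<in> S" "b \<in> S" "le a b" "is_maxchain (I a b) le C"
  shows "a \<in> C \<and> b \<in> C"
proof -
  have C: "C \<subseteq> I a b" using assms(4) by (simp add: is_maxchain_def is_chain_def)
  have "is_chain (I a b) le (insert a C)"
    using assms C prefl[OF assms(1)] by (auto simp: is_maxchain_def is_chain_def interval_def)
  then have 1: "insert a C = C" using assms(4) by (auto simp: is_maxchain_def)
  have "is_chain (I a b) le (insert b C)"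
    using assms C prefl[OF assms(2)] by (auto simp: is_maxchain_def is_chain_def interval_def)
  then have 2: "insert b C = C" using assms(4) by (auto simp: is_maxchain_def)
  show ?thesis using 1 2 by auto
qed


end


context gp begin
lemma glue:
  assumes S: "a \<in> S" "b \<in> S" "c \<in> S" and le: "le a b" "le b c"
    and C1: "is_maxchain (I a b) le C1" and C2: "is_maxchain (I b c) le C2"
  shows "is_maxchain (I a c) le (C1 \<union> C2) \<and> C1 \<inter> C2 = {b}"
proof -
  have C1s: "C1 \<subseteq> I a b" and C1c: "\<forall>x\<in>C1. \<forall>y\<in>C1. le x y \<or> le y x"
    using C1 by (auto simp: is_maxchain_def is_chain_def)
  have C2s: "C2 \<subseteq> I b c" and C2c: "\<forall>x\<in>C2. \<forall>y\<in>C2. le x y \<or> le y x"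
    using C2 by (auto simp: is_maxchain_def is_chain_def)
  have b1: "b \<in> C1" using mc_ends[OF S(1,2) le(1) C1] by simp
  have b2: "b \<in> C2" using mc_ends[OF S(2,3) le(2) C2] by simp
  have ch: "is_chain (I a c) le (C1 \<union> C2)"
    unfolding is_chain_def
  proof (intro conjI ballI)
    show "C1 \<union> C2 \<subseteq> I a c"
    proof
      fix x assume "x \<in> C1 \<union> C2"
      then show "x \<in> I a c"
      proof
        assume "x \<in> C1"
        then have h: "x \<in> S" "le a x" "le x b" using C1s by (auto simp: interval_def)
        have "le x c" by (rule ptrans[OF h(1) S(2,3) h(3) le(2)])
        then show ?thesis using h by (simp add: interval_def)
      next
        assume "x \<in> C2"
        then have h: "x \<in> S" "le b x" "le x c" using C2s by (auto simp: interval_def)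
        have "le a x" by (rule ptrans[OF S(1,2) h(1) le(1) h(2)])
        then show ?thesis using h by (simp add: interval_def)
      qed
    qed
  next
    fix x y assume xy: "x \<in> C1 \<union> C2" "y \<in> C1 \<union> C2"
    have cross: "le p q" if "p \<in> C1" "q \<in> C2" for p q
    proof -
      have h1: "p \<in> S" "le p b" using that C1s by (auto simp: interval_def)
      have h2: "q \<in> S" "le b q" using that C2s by (auto simp: interval_def)
      show ?thesis by (rule ptrans[OF h1(1) S(2) h2(1) h1(2) h2(2)])
    qed
    show "le x y \<or> le y x"
    proof (cases "x \<in> C1")
      case True
      then show ?thesis using xy C1c cross by blast
    next
      case False
      then have "x \<in> C2" using xy by blast
      then show ?thesis using xy C2c cross by blast
    qed
  qed
  have max: "D = C1 \<union> C2" if D: "is_chain (I a c) le D" "C1 \<union> C2 \<subseteq> D" for D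
  proof
    show "C1 \<union> C2 \<subseteq> D" by fact
    show "D \<subseteq> C1 \<union> C2"
    proof
      fix w assume w: "w \<in> D"
      have Ds: "D \<subseteq> I a c" and Dc: "\<forall>x\<in>D. \<forall>y\<in>D. le x y \<or> le y x"
        using D(1) by (auto simp: is_chain_def)
      have wS: "w \<in> S" "le a w" "le w c" using w Ds by (auto simp: interval_def)
      have "b \<in> D" using b1 D(2) by auto
      then have "le w b \<or> le b w" using Dc w by auto
      then show "w \<in> C1 \<union> C2"
      proof
        assume "le w b"
        have "is_chain (I a b) le (insert w C1)"
          unfolding is_chain_def
        proof (intro conjI ballI)
          show "insert w C1 \<subseteq> I a b" using C1s wS \<open>le w b\<close> by (simp add: interval_def)
          fix x y assume "x \<in> insert w C1" "y \<in> insert w C1"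
          then have "x \<in> D" "y \<in> D" using w D(2) by auto
          then show "le x y \<or> le y x" using Dc by blast
        qed
        then have "insert w C1 = C1" using C1 by (auto simp: is_maxchain_def)
        then show ?thesis by auto
      next
        assume "le b w"
        have "is_chain (I b c) le (insert w C2)"
          unfolding is_chain_def
        proof (intro conjI ballI)
          show "insert w C2 \<subseteq> I b c" using C2s wS \<open>le b w\<close> by (simp add: interval_def)
          fix x y assume "x \<in> insert w C2" "y \<in> insert w C2"
          then have "x \<in> D" "y \<in> D" using w D(2) by auto
          then show "le x y \<or> le y x" using Dc by blast
        qed
        then have "insert w C2 = C2" using C2 by (auto simp: is_maxchain_def)
        then show ?thesis by auto
      qed
    qed
  qed
  have xb: "x = b" if "x \<in> C1" "x \<in> C2" for x
  proof -
    have h1: "x \<in> S" "le x b" using that C1s by (auto simp: interval_def)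
    have h2: "le b x" using that C2s by (auto simp: interval_def)
    show ?thesis by (rule pantis[OF h1(1) S(2) h1(2) h2])
  qed
  have int: "C1 \<inter> C2 = {b}"
  proof (rule equalityI)
    show "C1 \<inter> C2 \<subseteq> {b}" using xb by (simp add: subset_iff)
    show "{b} \<subseteq> C1 \<inter> C2" using b1 b2 by simp
  qed
  have "is_maxchain (I a c) le (C1 \<union> C2)"
    unfolding is_maxchain_def
  proof (intro conjI allI impI)
    show "is_chain (I a c) le (C1 \<union> C2)" by (rule ch)
    fix D assume "is_chain (I a c) le D \<and> C1 \<union> C2 \<subseteq> D"
    then show "D = C1 \<union> C2" using max by blast
  qed
  then show ?thesis using int by blast
qed

end


context gp begin
lemma mc_fin: "is_maxchain (I a b) le C \<Longrightarrow> finite C"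
  using finI by (auto simp: is_maxchain_def is_chain_def intro: finite_subset)

lemma card_mc_int:
  assumes S: "a \<in> S" "b \<in> S" and le: "le a b"
    and C: "is_maxchain (I a b) le C" and C': "is_maxchain (I a b) le C'"
  shows "card C = card C'"
proof -
  let ?z = "pbot S le" and ?o = "ptop S le"
  obtain D where D: "is_maxchain (I ?z a) le D" using maxchain_ex finI by blast
  obtain E where E: "is_maxchain (I b ?o) le E" using maxchain_ex finI by blast
  have key: "card (D \<union> (X \<union> E)) + 2 = card D + card X + card E \<and> is_maxchain S le (D \<union> (X \<union> E))"
    if X: "is_maxchain (I a b) le X" for X
  proof -
    have oS: "?o \<in> S" and zS: "?z \<in> S" using one zero by auto
    have bo: "le b ?o" and ao: "le a ?o" and za: "le ?z a" using one zero S by auto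
    have g1: "is_maxchain (I a ?o) le (X \<union> E) \<and> X \<inter> E = {b}"
      by (rule glue[OF S(1,2) oS le bo X E])
    have g2: "is_maxchain (I ?z ?o) le (D \<union> (X \<union> E)) \<and> D \<inter> (X \<union> E) = {a}"
      using g1 by (intro glue[OF zS S(1) oS za ao D]) simp
    have fD: "finite D" using D mc_fin by blast
    have fX: "finite X" using X mc_fin by blast
    have fE: "finite E" using E mc_fin by blast
    have "card X + card E = card (X \<union> E) + card (X \<inter> E)" using fX fE card_Un_Int by blast
    moreover have "card D + card (X \<union> E) = card (D \<union> (X \<union> E)) + card (D \<inter> (X \<union> E))"
      using fD fX fE card_Un_Int by (metis finite_UnI)
    ultimately show ?thesis using g1 g2 I_S by auto
  qed
  show ?thesis using key[OF C] key[OF C'] mc by (metis add_right_cancel add.commute add.left_commute)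
qed

lemma Lr_card:
  assumes "a \<in> S" "b \<in> S" "le a b" "is_maxchain (I a b) le C"
  shows "card C = Lr S le a b + 1"
proof -
  let ?C = "SOME C. is_maxchain (I a b) le C"
  have "is_maxchain (I a b) le ?C" using maxchain_ex[OF finI] by (rule someI_ex)
  then have "card C = card ?C" using card_mc_int assms by blast
  moreover have "card C \<ge> 1"
    using mc_ends[OF assms] mc_fin[OF assms(4)] by (metis One_nat_def Suc_leI card_gt_0_iff empty_iff)
  ultimately show ?thesis by (simp add: Lr_def)
qed

lemma Lr_add:
  assumes "a \<in> S" "b \<in> S" "c \<in> S" "le a b" "le b c"
  shows "Lr S le a c = Lr S le a b + Lr S le b c"
proof -
  obtain C1 where C1: "is_maxchain (I a b) le C1" using maxchain_ex finI by blast
  obtain C2 where C2: "is_maxchain (I b c) le C2" using maxchain_ex finI by blast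
  have g: "is_maxchain (I a c) le (C1 \<union> C2) \<and> C1 \<inter> C2 = {b}" by (rule glue[OF assms C1 C2])
  have "le a c" by (rule ptrans[OF assms])
  have "card C1 + card C2 = card (C1 \<union> C2) + card (C1 \<inter> C2)"
    by (rule card_Un_Int[OF mc_fin[OF C1] mc_fin[OF C2]])
  then show ?thesis
    using Lr_card[OF assms(1,2,4) C1] Lr_card[OF assms(2,3,5) C2] Lr_card[OF assms(1,3) \<open>le a c\<close>] g
    by auto
qed

lemma I_single:
  assumes "a \<in> S" shows "I a a = {a}"
proof
  show "I a a \<subseteq> {a}"
  proof
    fix z assume "z \<in> I a a"
    then have "z \<in> S" "le a z" "le z a" by (auto simp: interval_def)
    then have "z = a" using pantis[OF _ assms] by blast
    then show "z \<in> {a}" by simp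
  qed
  show "{a} \<subseteq> I a a" using assms prefl[OF assms] by (simp add: interval_def)
qed

lemma Lr_refl:
  assumes "a \<in> S" shows "Lr S le a a = 0"
proof -
  obtain C where C: "is_maxchain (I a a) le C" using maxchain_ex finI by blast
  have "C \<subseteq> I a a" using C by (simp add: is_maxchain_def is_chain_def)
  then have "C \<subseteq> {a}" using I_single[OF assms] by simp
  moreover have "a \<in> C" using mc_ends[OF assms assms prefl[OF assms] C] by simp
  ultimately have "C = {a}" by auto
  then show ?thesis using Lr_card[OF assms assms prefl[OF assms] C] by simp
qed

lemma Lr_pos:
  assumes "a \<in> S" "b \<in> S" "le a b" "a \<noteq> b"
  shows "Lr S le a b > 0"
proof -
  obtain C where C: "is_maxchain (I a b) le C" using maxchain_ex finI by blast
  have "{a, b} \<subseteq> C" using mc_ends[OF assms(1-3) C] by simp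
  then have "card {a, b} \<le> card C" using mc_fin[OF C] by (rule card_mono[rotated])
  then show ?thesis using Lr_card[OF assms(1-3) C] assms(4) by simp
qed

lemma pbot_I:
  assumes "a \<in> S" "b \<in> S" "le a b" shows "pbot (I a b) le = a"
  unfolding pbot_def
proof (rule the_equality)
  show "a \<in> I a b \<and> (\<forall>y\<in>I a b. le a y)" using assms prefl[OF assms(1)] by (simp add: interval_def)
  fix x assume H: "x \<in> I a b \<and> (\<forall>y\<in>I a b. le x y)"
  have "a \<in> I a b" using assms prefl[OF assms(1)] by (simp add: interval_def)
  then have "le x a" using H by blast
  moreover have "x \<in> S" "le a x" using H by (auto simp: interval_def)
  ultimately show "x = a" using pantis[OF _ assms(1)] by blast
qed

lemma ptop_I:
  assumes "a \<in> S" "b \<in> S" "le a b" shows "ptop (I a b) le = b"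
  unfolding ptop_def
proof (rule the_equality)
  show "b \<in> I a b \<and> (\<forall>y\<in>I a b. le y b)" using assms prefl[OF assms(2)] by (simp add: interval_def)
  fix x assume H: "x \<in> I a b \<and> (\<forall>y\<in>I a b. le y x)"
  have "b \<in> I a b" using assms prefl[OF assms(2)] by (simp add: interval_def)
  then have "le b x" using H by blast
  moreover have "x \<in> S" "le x b" using H by (auto simp: interval_def)
  ultimately show "x = b" using pantis[OF _ assms(2)] by blast
qed

lemma I_I:
  assumes "c \<in> I a b" "d \<in> I a b" "a \<in> S" "b \<in> S"
  shows "interval (I a b) le c d = I c d"
proof
  show "interval (I a b) le c d \<subseteq> I c d" by (auto simp: interval_def)
  show "I c d \<subseteq> interval (I a b) le c d"
  proof
    fix z assume z: "z \<in> I c d"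
    have c: "c \<in> S" "le a c" and d: "d \<in> S" "le d b" using assms by (auto simp: interval_def)
    have zz: "z \<in> S" "le c z" "le z d" using z by (auto simp: interval_def)
    have "le a z" by (rule ptrans[OF assms(3) c(1) zz(1) c(2) zz(2)])
    moreover have "le z b" by (rule ptrans[OF zz(1) d(1) assms(4) zz(3) d(2)])
    ultimately show "z \<in> interval (I a b) le c d" using zz by (simp add: interval_def)
  qed
qed

lemma rho_I:
  assumes "a \<in> S" "b \<in> S" "le a b" "z \<in> I a b"
  shows "rho (I a b) le z = Lr S le a z"
proof -
  have "a \<in> I a b" using assms prefl by (simp add: interval_def)
  then show ?thesis using assms by (simp add: rho_def Lr_def pbot_I I_I)
qed

lemma prank_I:
  assumes "a \<in> S" "b \<in> S" "le a b"
  shows "prank (I a b) le = Lr S le a b"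
  using assms rho_I[OF assms] ptop_I[OF assms] prefl by (simp add: prank_def interval_def)

lemma rho_S: "rho S le z = Lr S le (pbot S le) z"
  by (simp add: rho_def Lr_def)

lemma card_lt1:
  assumes "a \<in> S" "b \<in> S" "c \<in> S" "le a c" "le c b" "a \<noteq> c"
  shows "card (I c b) < card (I a b)"
proof (rule psubset_card_mono[OF finI])
  have "a \<in> I a b" using assms prefl[OF assms(1)] ptrans[OF assms(1,3,2) assms(4,5)] by (simp add: interval_def)
  moreover have "a \<notin> I c b"
  proof
    assume "a \<in> I c b"
    then have "le c a" by (simp add: interval_def)
    then show False using pantis[OF assms(1,3) assms(4)] assms(6) by blast
  qed
  moreover have "I c b \<subseteq> I a b"
  proof
    fix z assume "z \<in> I c b"
    then have z: "z \<in> S" "le c z" "le z b" by (auto simp: interval_def)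
    have "le a z" by (rule ptrans[OF assms(1,3) z(1) assms(4) z(2)])
    then show "z \<in> I a b" using z by (simp add: interval_def)
  qed
  ultimately show "I c b \<subset> I a b" by blast
qed

lemma card_lt2:
  assumes "a \<in> S" "b \<in> S" "c \<in> S" "le a c" "le c b" "c \<noteq> b"
  shows "card (I a c) < card (I a b)"
proof (rule psubset_card_mono[OF finI])
  have "b \<in> I a b" using assms prefl[OF assms(2)] ptrans[OF assms(1,3,2) assms(4,5)] by (simp add: interval_def)
  moreover have "b \<notin> I a c"
  proof
    assume "b \<in> I a c"
    then have "le b c" by (simp add: interval_def)
    then show False using pantis[OF assms(3,2) assms(5)] assms(6) by blast
  qed
  moreover have "I a c \<subseteq> I a b"
  proof
    fix z assume "z \<in> I a c"
    then have z: "z \<in> S" "le a z" "le z c" by (auto simp: interval_def)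
    have "le z b" by (rule ptrans[OF z(1) assms(3,2) z(3) assms(5)])
    then show "z \<in> I a b" using z by (simp add: interval_def)
  qed
  ultimately show "I a c \<subset> I a b" by blast
qed

lemma gp_dual: "gp S (dual_rel le)"
proof
  show "finite_poset S (dual_rel le)"
    using fp unfolding finite_poset_def dual_rel_def by blast
  show "\<exists>z\<in>S. \<forall>y\<in>S. dual_rel le z y" using ex_top by (simp add: dual_rel_def)
  show "\<exists>z\<in>S. \<forall>y\<in>S. dual_rel le y z" using ex_bot by (simp add: dual_rel_def)
  show "card C = card D" if "is_maxchain S (dual_rel le) C" "is_maxchain S (dual_rel le) D" for C D
  proof -
    have "is_maxchain S le C" "is_maxchain S le D" using that by (simp_all add: is_maxchain_dual)
    then show ?thesis by (rule mc)
  qed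
qed

end


context gp begin

lemma a_in_I: "a \<in> S \<Longrightarrow> b \<in> S \<Longrightarrow> le a b \<Longrightarrow> a \<in> I a b"
  using prefl by (simp add: interval_def)

lemma b_in_I: "a \<in> S \<Longrightarrow> b \<in> S \<Longrightarrow> le a b \<Longrightarrow> b \<in> I a b"
  using prefl by (simp add: interval_def)

lemma card_I_pos: "a \<in> S \<Longrightarrow> b \<in> S \<Longrightarrow> le a b \<Longrightarrow> card (I a b) > 0"
  using a_in_I finI card_gt_0_iff by blast

lemma H_sum_I:
  assumes "a \<in> S" "b \<in> S" "le a b"
  shows "H_sum f (I a b) le = (\<Sum>x\<in>{x\<in>I a b. x \<noteq> a}. [:-1, 1:] ^ (Lr S le a x - 1) * f (I x b))"
  unfolding H_sum_def pbot_I[OF assms] ptop_I[OF assms]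
proof (rule sum.cong[OF refl])
  fix x assume "x \<in> {x \<in> I a b. x \<noteq> a}"
  then have x: "x \<in> I a b" by simp
  show "[:-1, 1:] ^ (rho (I a b) le x - 1) * f (interval (I a b) le x b) =
        [:-1, 1:] ^ (Lr S le a x - 1) * f (I x b)"
    using rho_I[OF assms x] I_I[OF x b_in_I[OF assms] assms(1,2)] by simp
qed

lemma I_mem: "x \<in> I a b \<Longrightarrow> x \<in> S \<and> le a x \<and> le x b"
  by (simp add: interval_def)

lemma G_fuel_aux:
  "\<forall>a b. a \<in> S \<longrightarrow> b \<in> S \<longrightarrow> le a b \<longrightarrow> card (I a b) \<le> m \<longrightarrow>
     G_aux m (I a b) le = G_aux (card (I a b)) (I a b) le"
proof (induction m rule: less_induct)
  case (less m)
  show ?case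
  proof (intro allI impI)
    fix a b assume H: "a \<in> S" "b \<in> S" "le a b" "card (I a b) \<le> m"
    obtain k where k: "card (I a b) = Suc k" using card_I_pos[OF H(1-3)] gr0_implies_Suc by blast
    obtain m' where m: "m = Suc m'" using H(4) k by (cases m) auto
    have eqH: "H_sum (\<lambda>T. G_aux m' T le) (I a b) le = H_sum (\<lambda>T. G_aux k T le) (I a b) le"
      unfolding H_sum_I[OF H(1-3)]
    proof (rule sum.cong[OF refl])
      fix x assume "x \<in> {x \<in> I a b. x \<noteq> a}"
      then have x: "x \<in> S" "le a x" "le x b" "x \<noteq> a" by (auto simp: interval_def)
      have lt: "card (I x b) < card (I a b)" by (rule card_lt1[OF H(1,2) x(1) x(2,3)]) (use x in auto)
      have "G_aux m' (I x b) le = G_aux (card (I x b)) (I x b) le"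
        using less.IH[of m'] m lt k H(4) x H(2) by auto
      moreover have "G_aux k (I x b) le = G_aux (card (I x b)) (I x b) le"
        using less.IH[of k] m lt k H(4) x H(2) by auto
      ultimately show "[:-1, 1:] ^ (Lr S le a x - 1) * G_aux m' (I x b) le =
                       [:-1, 1:] ^ (Lr S le a x - 1) * G_aux k (I x b) le" by simp
    qed
    show "G_aux m (I a b) le = G_aux (card (I a b)) (I a b) le"
      by (simp only: m k G_aux.simps eqH)
  qed
qed

lemma G_fuel:
  assumes "a \<in> S" "b \<in> S" "le a b" "card (I a b) \<le> m"
  shows "G_aux m (I a b) le = G_poly (I a b) le"
  using G_fuel_aux[of m] assms unfolding G_poly_def by blast

lemma G_one:
  assumes "a \<in> S" shows "G_poly (I a a) le = 1"
proof -
  have c: "card (I a a) = Suc 0" using I_single[OF assms] by simp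
  have p: "prank (I a a) le = 0" using prank_I[OF assms assms prefl[OF assms]] Lr_refl[OF assms] by simp
  show ?thesis unfolding G_poly_def c G_aux.simps using p by simp
qed

lemma G_rec:
  assumes "a \<in> S" "b \<in> S" "le a b" "a \<noteq> b"
  shows "G_poly (I a b) le = tau_half (Lr S le a b)
     ([:1, -1:] * (\<Sum>x\<in>{x\<in>I a b. x \<noteq> a}. [:-1, 1:] ^ (Lr S le a x - 1) * G_poly (I x b) le))"
proof -
  obtain k where k: "card (I a b) = Suc k" using card_I_pos[OF assms(1-3)] gr0_implies_Suc by blast
  have L: "Lr S le a b \<noteq> 0" using Lr_pos[OF assms] by simp
  have eqH: "H_sum (\<lambda>T. G_aux k T le) (I a b) le =
     (\<Sum>x\<in>{x\<in>I a b. x \<noteq> a}. [:-1, 1:] ^ (Lr S le a x - 1) * G_poly (I x b) le)"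
    unfolding H_sum_I[OF assms(1-3)]
  proof (rule sum.cong[OF refl])
    fix x assume "x \<in> {x \<in> I a b. x \<noteq> a}"
    then have x: "x \<in> S" "le a x" "le x b" "x \<noteq> a" by (auto simp: interval_def)
    have lt: "card (I x b) < card (I a b)" by (rule card_lt1[OF assms(1,2) x(1) x(2,3)]) (use x in auto)
    have "G_aux k (I x b) le = G_poly (I x b) le"
      using G_fuel[OF x(1) assms(2) x(3)] lt k by simp
    then show "[:-1, 1:] ^ (Lr S le a x - 1) * G_aux k (I x b) le =
               [:-1, 1:] ^ (Lr S le a x - 1) * G_poly (I x b) le" by simp
  qed
  have "G_poly (I a b) le = G_aux (Suc k) (I a b) le" by (simp add: G_poly_def k)
  also have "\<dots> = tau_half (Lr S le a b) ([:1, -1:] * H_sum (\<lambda>T. G_aux k T le) (I a b) le)"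
    using L prank_I[OF assms(1-3)] by simp
  finally show ?thesis unfolding eqH .
qed

lemma B_sum_I:
  assumes "a \<in> S" "b \<in> S" "le a b"
  shows "(\<Sum>x\<in>{x\<in>I a b. x \<noteq> ptop (I a b) le}.
            f (interval (I a b) le (pbot (I a b) le) x) * u ^ (prank (I a b) le - rho (I a b) le x)
            * poly (map_poly of_int (G_poly (interval (I a b) le x (ptop (I a b) le)) le)) (v / u))
       = (\<Sum>x\<in>{x\<in>I a b. x \<noteq> b}. f (I a x) * u ^ (Lr S le x b) * ev (v / u) (G_poly (I x b) le))"
  unfolding pbot_I[OF assms] ptop_I[OF assms]
proof (rule sum.cong[OF refl])
  fix x assume "x \<in> {x \<in> I a b. x \<noteq> b}"
  then have x: "x \<in> I a b" by simp
  then have xx: "x \<in> S" "le a x" "le x b" by (auto simp: interval_def)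
  have "prank (I a b) le - rho (I a b) le x = Lr S le x b"
    using prank_I[OF assms] rho_I[OF assms x] Lr_add[OF assms(1) xx(1) assms(2) xx(2,3)] by simp
  then show "f (interval (I a b) le a x) * u ^ (prank (I a b) le - rho (I a b) le x) *
       poly (map_poly of_int (G_poly (interval (I a b) le x b) le)) (v / u) =
       f (I a x) * u ^ Lr S le x b * ev (v / u) (G_poly (I x b) le)"
    using I_I[OF a_in_I[OF assms] x assms(1,2)] I_I[OF x b_in_I[OF assms] assms(1,2)]
    by (simp add: ev_def)
qed

lemma B_fuel_aux:
  "\<forall>a b. a \<in> S \<longrightarrow> b \<in> S \<longrightarrow> le a b \<longrightarrow> card (I a b) \<le> m \<longrightarrow>
     B_aux m (I a b) le u v = B_aux (card (I a b)) (I a b) le u v"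
proof (induction m rule: less_induct)
  case (less m)
  show ?case
  proof (intro allI impI)
    fix a b assume H: "a \<in> S" "b \<in> S" "le a b" "card (I a b) \<le> m"
    obtain k where k: "card (I a b) = Suc k" using card_I_pos[OF H(1-3)] gr0_implies_Suc by blast
    obtain m' where m: "m = Suc m'" using H(4) k by (cases m) auto
    have eqH: "(\<Sum>x\<in>{x\<in>I a b. x \<noteq> b}. B_aux m' (I a x) le u v * u ^ (Lr S le x b) * ev (v / u) (G_poly (I x b) le))
      = (\<Sum>x\<in>{x\<in>I a b. x \<noteq> b}. B_aux k (I a x) le u v * u ^ (Lr S le x b) * ev (v / u) (G_poly (I x b) le))"
    proof (rule sum.cong[OF refl])
      fix x assume "x \<in> {x \<in> I a b. x \<noteq> b}"
      then have x: "x \<in> S" "le a x" "le x b" "x \<noteq> b" by (auto simp: interval_def)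
      have lt: "card (I a x) < card (I a b)" by (rule card_lt2[OF H(1,2) x(1) x(2,3)]) (use x in auto)
      have "B_aux m' (I a x) le u v = B_aux (card (I a x)) (I a x) le u v"
        using less.IH[of m'] m lt k H(4) x H(1) by auto
      moreover have "B_aux k (I a x) le u v = B_aux (card (I a x)) (I a x) le u v"
        using less.IH[of k] m lt k H(4) x H(1) by auto
      ultimately show "B_aux m' (I a x) le u v * u ^ (Lr S le x b) * ev (v / u) (G_poly (I x b) le) =
                       B_aux k (I a x) le u v * u ^ (Lr S le x b) * ev (v / u) (G_poly (I x b) le)" by simp
    qed
    show "B_aux m (I a b) le u v = B_aux (card (I a b)) (I a b) le u v"
      unfolding m k B_aux.simps B_sum_I[OF H(1-3), of "\<lambda>T. B_aux m' T le u v"]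
        B_sum_I[OF H(1-3), of "\<lambda>T. B_aux k T le u v"] eqH ..
  qed
qed

lemma B_one:
  assumes "a \<in> S" shows "B_val (I a a) le u v = 1"
proof -
  have c: "card (I a a) = Suc 0" using I_single[OF assms] by simp
  have p: "prank (I a a) le = 0" using prank_I[OF assms assms prefl[OF assms]] Lr_refl[OF assms] by simp
  show ?thesis unfolding B_val_def c B_aux.simps using p by simp
qed

lemma B_rec:
  assumes "a \<in> S" "b \<in> S" "le a b" "a \<noteq> b"
  shows "B_val (I a b) le u v = ev (u * v) (G_poly (I a b) le)
     - (\<Sum>x\<in>{x\<in>I a b. x \<noteq> b}. B_val (I a x) le u v * u ^ (Lr S le x b) * ev (v / u) (G_poly (I x b) le))"
proof -
  obtain k where k: "card (I a b) = Suc k" using card_I_pos[OF assms(1-3)] gr0_implies_Suc by blast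
  have L: "prank (I a b) le \<noteq> 0" using Lr_pos[OF assms] prank_I[OF assms(1-3)] by simp
  have eqH: "(\<Sum>x\<in>{x\<in>I a b. x \<noteq> b}. B_aux k (I a x) le u v * u ^ (Lr S le x b) * ev (v / u) (G_poly (I x b) le))
      = (\<Sum>x\<in>{x\<in>I a b. x \<noteq> b}. B_val (I a x) le u v * u ^ (Lr S le x b) * ev (v / u) (G_poly (I x b) le))"
  proof (rule sum.cong[OF refl])
    fix x assume "x \<in> {x \<in> I a b. x \<noteq> b}"
    then have x: "x \<in> S" "le a x" "le x b" "x \<noteq> b" by (auto simp: interval_def)
    have lt: "card (I a x) < card (I a b)" by (rule card_lt2[OF assms(1,2) x(1) x(2,3)]) (use x in auto)
    have "B_aux k (I a x) le u v = B_val (I a x) le u v"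
      using B_fuel_aux[of k] lt k x assms(1) unfolding B_val_def by auto
    then show "B_aux k (I a x) le u v * u ^ (Lr S le x b) * ev (v / u) (G_poly (I x b) le) =
               B_val (I a x) le u v * u ^ (Lr S le x b) * ev (v / u) (G_poly (I x b) le)" by simp
  qed
  have "B_val (I a b) le u v = B_aux (Suc k) (I a b) le u v" by (simp add: B_val_def k)
  also have "\<dots> = ev (u * v) (G_poly (I a b) le)
     - (\<Sum>x\<in>{x\<in>I a b. x \<noteq> b}. B_aux k (I a x) le u v * u ^ (Lr S le x b) * ev (v / u) (G_poly (I x b) le))"
    unfolding B_aux.simps B_sum_I[OF assms(1-3), of "\<lambda>T. B_aux k T le u v"] using L by (simp add: ev_def)
  finally show ?thesis unfolding eqH .
qed

end


lemma kappa_neg: "([:1, -1:] :: int poly) = smult (-1) [:-1, 1:]"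
  by simp

lemma kappa_mult: "[:1, -1:] ^ a * [:-1, 1:] ^ b = smult ((-1) ^ a) ([:-1, 1::int:] ^ (a + b))"
  unfolding kappa_neg smult_power by (simp add: power_add)

lemma kappa_shift: "k \<ge> 1 \<Longrightarrow> [:1, -1:] * ([:-1, 1::int:] ^ (k - 1) * g) = - ([:-1, 1:] ^ k * g)"
proof -
  assume "k \<ge> 1"
  then obtain j where k: "k = Suc j" by (cases k) auto
  have n: "[:1, -1::int:] = - [:-1, 1:]" by simp
  show ?thesis unfolding k n power_Suc by (simp only: mult_minus_left mult.assoc diff_Suc_1)
qed

lemma degree_kappa: "degree ([:-1, 1::int:] ^ k) \<le> k"
  using degree_power_le[of "[:-1, 1::int:]" k] by simp

context gp begin

lemma I_filter: "{x \<in> I a b. P x} = {x \<in> S. le a x \<and> le x b \<and> P x}"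
  by (auto simp: interval_def)

lemma I_set: "I a b = {x \<in> S. le a x \<and> le x b}"
  by (simp add: interval_def)

lemma sum_split_a:
  assumes "a \<in> S" "b \<in> S" "le a b"
  shows "(\<Sum>z\<in>I a b. f z) = f a + (\<Sum>z\<in>{z\<in>I a b. z \<noteq> a}. f z)"
proof -
  have "{z\<in>I a b. z \<noteq> a} = I a b - {a}" by auto
  then show ?thesis using sum.remove[OF finI a_in_I[OF assms]] by simp
qed

lemma sum_split_b:
  assumes "a \<in> S" "b \<in> S" "le a b"
  shows "(\<Sum>z\<in>I a b. f z) = f b + (\<Sum>z\<in>{z\<in>I a b. z \<noteq> b}. f z)"
proof -
  have "{z\<in>I a b. z \<noteq> b} = I a b - {b}" by auto
  then show ?thesis using sum.remove[OF finI b_in_I[OF assms]] by simp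
qed

lemma deg_G2:
  assumes "a \<in> S" "b \<in> S" "le a b" "a \<noteq> b"
  shows "2 * degree (G_poly (I a b) le) < Lr S le a b"
proof (cases "G_poly (I a b) le = 0")
  case True
  then show ?thesis using Lr_pos[OF assms] by simp
next
  case False
  let ?p = "[:1, -1:] * (\<Sum>x\<in>{x\<in>I a b. x \<noteq> a}. [:-1, 1:] ^ (Lr S le a x - 1) * G_poly (I x b) le)"
  have "coeff (G_poly (I a b) le) (degree (G_poly (I a b) le)) \<noteq> 0" using False by simp
  then have "coeff (tau_half (Lr S le a b) ?p) (degree (G_poly (I a b) le)) \<noteq> 0"
    using G_rec[OF assms] by simp
  then show ?thesis unfolding coeff_tau_half by (cases "2 * degree (G_poly (I a b) le) < Lr S le a b") auto
qed

lemma deg_G: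
  assumes "a \<in> S" "b \<in> S" "le a b"
  shows "degree (G_poly (I a b) le) \<le> Lr S le a b"
proof (cases "a = b")
  case True
  then show ?thesis using G_one[OF assms(1)] by simp
next
  case False
  then show ?thesis using deg_G2[OF assms False] by simp
qed

end

locale eul = gp +
  assumes alt: "\<And>x y. x \<in> S \<Longrightarrow> y \<in> S \<Longrightarrow> le x y \<Longrightarrow> x \<noteq> y \<Longrightarrow>
     (\<Sum>z\<in>interval S le x y. (-1::int) ^ (Lr S le x z)) = 0"
begin

lemma alt_minus:
  assumes "a \<in> S" "w \<in> S" "le a w" "a \<noteq> w"
  shows "(\<Sum>z\<in>{z\<in>I a w. z \<noteq> a}. (-1::int) ^ (Lr S le a z)) = -1"
  using alt[OF assms] sum_split_a[OF assms(1-3), of "\<lambda>z. (-1::int) ^ (Lr S le a z)"] Lr_refl[OF assms(1)]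
  by simp

lemma kls_aux:
  "\<forall>a b. a \<in> S \<longrightarrow> b \<in> S \<longrightarrow> le a b \<longrightarrow> card (I a b) \<le> n \<longrightarrow>
     rev_poly (Lr S le a b) (G_poly (I a b) le) = (\<Sum>z\<in>I a b. [:-1, 1:] ^ (Lr S le a z) * G_poly (I z b) le)"
proof (induction n)
  case 0
  then show ?case using card_I_pos by fastforce
next
  case (Suc n)
  show ?case
  proof (intro allI impI)
    fix a b assume H: "a \<in> S" "b \<in> S" "le a b" "card (I a b) \<le> Suc n"
    show "rev_poly (Lr S le a b) (G_poly (I a b) le) = (\<Sum>z\<in>I a b. [:-1, 1:] ^ (Lr S le a z) * G_poly (I z b) le)"
    proof (cases "a = b")
      case True
      have "rev_poly 0 1 = 1" by (simp add: rev_poly_def)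
      then show ?thesis using True I_single[OF H(1)] G_one[OF H(1)] Lr_refl[OF H(1)] by simp
    next
      case False
      let ?L = "Lr S le a b"
      define q where "q = (\<Sum>z\<in>{z\<in>I a b. z \<noteq> a}. [:-1, 1:] ^ (Lr S le a z) * G_poly (I z b) le)"
      have zmem: "z \<in> S \<and> le a z \<and> le z b \<and> z \<noteq> a" if "z \<in> {z\<in>I a b. z \<noteq> a}" for z
        using that by (simp add: interval_def)
      have IH: "rev_poly (Lr S le z b) (G_poly (I z b) le) = (\<Sum>w\<in>I z b. [:-1, 1:] ^ (Lr S le z w) * G_poly (I w b) le)"
        if "z \<in> {z\<in>I a b. z \<noteq> a}" for z
      proof -
        have z: "z \<in> S" "le a z" "le z b" "z \<noteq> a" using zmem[OF that] by auto
        have "card (I z b) < card (I a b)" by (rule card_lt1[OF H(1,2) z(1) z(2,3)]) (use z in auto)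
        then show ?thesis using Suc.IH z H by auto
      qed
      have Gq: "G_poly (I a b) le = tau_half ?L (- q)"
      proof -
        have "[:1, -1:] * (\<Sum>x\<in>{x\<in>I a b. x \<noteq> a}. [:-1, 1:] ^ (Lr S le a x - 1) * G_poly (I x b) le)
            = (\<Sum>x\<in>{x\<in>I a b. x \<noteq> a}. - ([:-1, 1:] ^ (Lr S le a x) * G_poly (I x b) le))"
          unfolding sum_distrib_left
        proof (rule sum.cong[OF refl])
          fix x assume x: "x \<in> {x\<in>I a b. x \<noteq> a}"
          have "Lr S le a x \<ge> 1" using Lr_pos[of a x] zmem[OF x] H by auto
          then show "[:1, -1:] * ([:-1, 1:] ^ (Lr S le a x - 1) * G_poly (I x b) le) =
                - ([:-1, 1:] ^ (Lr S le a x) * G_poly (I x b) le)" by (rule kappa_shift)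
        qed
        also have "\<dots> = - q" unfolding q_def by (simp add: sum_negf)
        finally show ?thesis using G_rec[OF H(1-3) False] by simp
      qed
      have dq: "degree q \<le> ?L"
        unfolding q_def
      proof (rule degree_sum_le[OF _ ])
        show "finite {z\<in>I a b. z \<noteq> a}" using finI by simp
        fix z assume z: "z \<in> {z\<in>I a b. z \<noteq> a}"
        have zz: "z \<in> S" "le a z" "le z b" using zmem[OF z] by auto
        have "degree ([:-1, 1:] ^ (Lr S le a z) * G_poly (I z b) le) \<le> degree ([:-1, 1::int:] ^ (Lr S le a z)) + degree (G_poly (I z b) le)"
          by (rule degree_mult_le)
        also have "\<dots> \<le> Lr S le a z + Lr S le z b"
          using degree_kappa deg_G[OF zz(1) H(2) zz(3)] by (rule add_mono)
        also have "\<dots> = ?L" using Lr_add[OF H(1) zz(1) H(2) zz(2,3)] by simp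
        finally show "degree ([:-1, 1:] ^ (Lr S le a z) * G_poly (I z b) le) \<le> ?L" .
      qed
      have rq: "rev_poly ?L q = - q"
      proof -
        have "rev_poly ?L q = (\<Sum>z\<in>{z\<in>I a b. z \<noteq> a}. rev_poly ?L ([:-1, 1:] ^ (Lr S le a z) * G_poly (I z b) le))"
          unfolding q_def by (rule rev_poly_sum)
        also have "\<dots> = (\<Sum>z\<in>{z\<in>I a b. z \<noteq> a}. \<Sum>w\<in>I z b. smult ((-1) ^ (Lr S le a z)) ([:-1, 1:] ^ (Lr S le a w) * G_poly (I w b) le))"
        proof (rule sum.cong[OF refl])
          fix z assume z: "z \<in> {z\<in>I a b. z \<noteq> a}"
          have zz: "z \<in> S" "le a z" "le z b" using zmem[OF z] by auto
          have "rev_poly ?L ([:-1, 1:] ^ (Lr S le a z) * G_poly (I z b) le)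
              = rev_poly (Lr S le a z + Lr S le z b) ([:-1, 1:] ^ (Lr S le a z) * G_poly (I z b) le)"
            using Lr_add[OF H(1) zz(1) H(2) zz(2,3)] by simp
          also have "\<dots> = rev_poly (Lr S le a z) ([:-1, 1:] ^ (Lr S le a z)) * rev_poly (Lr S le z b) (G_poly (I z b) le)"
            by (rule rev_poly_mult[OF degree_kappa deg_G[OF zz(1) H(2) zz(3)]])
          also have "\<dots> = [:1, -1:] ^ (Lr S le a z) * (\<Sum>w\<in>I z b. [:-1, 1:] ^ (Lr S le z w) * G_poly (I w b) le)"
            unfolding rev_poly_kappa IH[OF z] ..
          also have "\<dots> = (\<Sum>w\<in>I z b. smult ((-1) ^ (Lr S le a z)) ([:-1, 1:] ^ (Lr S le a w) * G_poly (I w b) le))"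
            unfolding sum_distrib_left
          proof (rule sum.cong[OF refl])
            fix w assume w: "w \<in> I z b"
            have ww: "w \<in> S" "le z w" "le w b" using w by (auto simp: interval_def)
            have e: "Lr S le a w = Lr S le a z + Lr S le z w" by (rule Lr_add[OF H(1) zz(1) ww(1) zz(2) ww(2)])
            show "[:1, -1:] ^ Lr S le a z * ([:-1, 1:] ^ Lr S le z w * G_poly (I w b) le) =
                  smult ((-1) ^ Lr S le a z) ([:-1, 1:] ^ Lr S le a w * G_poly (I w b) le)"
              unfolding e mult.assoc[symmetric] kappa_mult by simp
          qed
          finally show "rev_poly ?L ([:-1, 1:] ^ (Lr S le a z) * G_poly (I z b) le) =
             (\<Sum>w\<in>I z b. smult ((-1) ^ (Lr S le a z)) ([:-1, 1:] ^ (Lr S le a w) * G_poly (I w b) le))" .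
        qed
        also have "\<dots> = (\<Sum>w\<in>{w\<in>I a b. w \<noteq> a}. \<Sum>z\<in>{z\<in>I a w. z \<noteq> a}. smult ((-1) ^ (Lr S le a z)) ([:-1, 1:] ^ (Lr S le a w) * G_poly (I w b) le))"
        proof -
          define F where "F = (\<lambda>z w. smult ((-1::int) ^ (Lr S le a z)) ([:-1, 1:] ^ (Lr S le a w) * G_poly (I w b) le))"
          have "(\<Sum>z\<in>{z\<in>I a b. z \<noteq> a}. \<Sum>w\<in>I z b. F z w) = (\<Sum>w\<in>{w\<in>I a b. w \<noteq> a}. \<Sum>z\<in>{z\<in>I a w. z \<noteq> a}. F z w)"
          unfolding I_filter unfolding I_set
        proof (rule sum_swap_cond[OF finS])
          fix z w assume zw: "z \<in> S" "w \<in> S"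
          show "(le a z \<and> le z b \<and> z \<noteq> a) \<and> le z w \<and> le w b \<longleftrightarrow> (le a w \<and> le w b \<and> w \<noteq> a) \<and> le a z \<and> le z w \<and> z \<noteq> a"
          proof
            assume A: "(le a z \<and> le z b \<and> z \<noteq> a) \<and> le z w \<and> le w b"
            have aw: "le a w" using ptrans[OF H(1) zw(1) zw(2)] A by blast
            have "w \<noteq> a"
            proof
              assume "w = a"
              then have "z = a" using pantis[OF zw(1) H(1)] A by blast
              then show False using A by blast
            qed
            then show "(le a w \<and> le w b \<and> w \<noteq> a) \<and> le a z \<and> le z w \<and> z \<noteq> a" using A aw by blast
          next
            assume A: "(le a w \<and> le w b \<and> w \<noteq> a) \<and> le a z \<and> le z w \<and> z \<noteq> a"
            have "le z b" using ptrans[OF zw(1) zw(2) H(2)] A by blast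
            then show "(le a z \<and> le z b \<and> z \<noteq> a) \<and> le z w \<and> le w b" using A by blast
          qed
        qed
          then show ?thesis unfolding F_def .
        qed
        also have "\<dots> = (\<Sum>w\<in>{w\<in>I a b. w \<noteq> a}. - ([:-1, 1:] ^ (Lr S le a w) * G_poly (I w b) le))"
        proof (rule sum.cong[OF refl])
          fix w assume w: "w \<in> {w\<in>I a b. w \<noteq> a}"
          have ww: "w \<in> S" "le a w" "w \<noteq> a" using zmem[OF w] by auto
          show "(\<Sum>z\<in>{z\<in>I a w. z \<noteq> a}. smult ((-1) ^ (Lr S le a z)) ([:-1, 1:] ^ (Lr S le a w) * G_poly (I w b) le))
                = - ([:-1, 1:] ^ (Lr S le a w) * G_poly (I w b) le)"
            unfolding smult_sum[symmetric] alt_minus[OF H(1) ww(1) ww(2) ww(3)[symmetric]] by simp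
        qed
        also have "\<dots> = - q" unfolding q_def by (simp add: sum_negf)
        finally show ?thesis .
      qed
      have d2: "degree (- q) \<le> ?L" using dq by simp
      have r2: "rev_poly ?L (- q) = - (- q)" using rq by (simp add: rev_poly_uminus)
      have "rev_poly ?L (G_poly (I a b) le) = G_poly (I a b) le + q"
        unfolding Gq tau_rev[OF d2 r2] by simp
      also have "\<dots> = (\<Sum>z\<in>I a b. [:-1, 1:] ^ (Lr S le a z) * G_poly (I z b) le)"
        unfolding sum_split_a[OF H(1-3)] q_def using Lr_refl[OF H(1)] by simp
      finally show ?thesis .
    qed
  qed
qed

lemma kls:
  assumes "a \<in> S" "b \<in> S" "le a b"
  shows "rev_poly (Lr S le a b) (G_poly (I a b) le) = (\<Sum>z\<in>I a b. [:-1, 1:] ^ (Lr S le a z) * G_poly (I z b) le)"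
  using kls_aux[of "card (I a b)"] assms by blast

end


lemma neg1_split: "(-1::int) ^ (a + b) * (-1) ^ a = (-1) ^ b"
proof -
  have "(-1::int) ^ (a + b) * (-1) ^ a = (-1) ^ b * ((-1) ^ a * (-1) ^ a)" by (simp add: power_add)
  also have "(-1::int) ^ a * (-1) ^ a = 1" by (simp add: power_add[symmetric] flip: power_mult_distrib)
  finally show ?thesis by simp
qed

lemma smult_sum_right: "smult c (sum f A) = (\<Sum>x\<in>A. smult c (f x))"
  by (induction A rule: infinite_finite_induct) (simp_all add: smult_add_right)

context eul begin

lemma eul_dual: "eul S (dual_rel le)"
proof -
  have A: "(\<Sum>z\<in>interval S (dual_rel le) x y. (-1::int) ^ (Lr S (dual_rel le) x z)) = 0"
    if H: "x \<in> S" "y \<in> S" "dual_rel le x y" "x \<noteq> y" for x y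
  proof -
    have yx: "le y x" using H(3) by (simp add: dual_rel_def)
    have "(\<Sum>z\<in>interval S (dual_rel le) x y. (-1::int) ^ (Lr S (dual_rel le) x z))
        = (\<Sum>z\<in>I y x. (-1::int) ^ (Lr S le y x) * (-1) ^ (Lr S le y z))"
      unfolding interval_dual Lr_dual
    proof (rule sum.cong[OF refl])
      fix z assume z: "z \<in> I y x"
      then have zz: "z \<in> S" "le y z" "le z x" by (auto simp: interval_def)
      have "Lr S le y x = Lr S le y z + Lr S le z x" by (rule Lr_add[OF H(2) zz(1) H(1) zz(2,3)])
      then show "(-1::int) ^ Lr S le z x = (-1) ^ Lr S le y x * (-1) ^ Lr S le y z"
        using neg1_split[of "Lr S le y z" "Lr S le z x"] by (simp add: mult.commute)
    qed
    also have "\<dots> = (-1) ^ (Lr S le y x) * (\<Sum>z\<in>I y x. (-1::int) ^ (Lr S le y z))"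
      by (simp add: sum_distrib_left)
    also have "\<dots> = 0" using alt[OF H(2,1) yx] H(4) by simp
    finally show ?thesis .
  qed
  show ?thesis
    unfolding eul_def eul_axioms_def using gp_dual A by blast
qed

abbreviation Gd where "Gd a b \<equiv> G_poly (I a b) (dual_rel le)"

lemma Gd_kls:
  assumes "a \<in> S" "b \<in> S" "le a b"
  shows "rev_poly (Lr S le a b) (Gd a b) = (\<Sum>z\<in>I a b. [:-1, 1:] ^ (Lr S le z b) * Gd a z)"
proof -
  have "dual_rel le b a" using assms(3) by (simp add: dual_rel_def)
  from eul.kls[OF eul_dual assms(2,1) this] show ?thesis
    by (simp only: interval_dual Lr_dual)
qed

lemma Gd_one: "a \<in> S \<Longrightarrow> Gd a a = 1"
  using gp.G_one[OF gp_dual, of a] by (simp only: interval_dual)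

lemma Gd_deg:
  assumes "a \<in> S" "b \<in> S" "le a b"
  shows "degree (Gd a b) \<le> Lr S le a b"
proof -
  have "dual_rel le b a" using assms(3) by (simp add: dual_rel_def)
  from gp.deg_G[OF gp_dual assms(2,1) this] show ?thesis
    by (simp only: interval_dual Lr_dual)
qed

lemma Gd_deg2:
  assumes "a \<in> S" "b \<in> S" "le a b" "a \<noteq> b"
  shows "2 * degree (Gd a b) < Lr S le a b"
proof -
  have "dual_rel le b a" using assms(3) by (simp add: dual_rel_def)
  from gp.deg_G2[OF gp_dual assms(2,1) this] assms(4) show ?thesis
    by (simp only: interval_dual Lr_dual) simp
qed

lemma alt_delta:
  assumes "w \<in> S" "v \<in> S" "le w v"
  shows "(\<Sum>z\<in>I w v. (-1::int) ^ (Lr S le w z)) = (if w = v then 1 else 0)"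
proof (cases "w = v")
  case True
  then show ?thesis using I_single[OF assms(1)] Lr_refl[OF assms(1)] by simp
next
  case False
  then show ?thesis using alt[OF assms False] by simp
qed

definition mm where
  "mm x y = (\<Sum>z\<in>I x y. smult ((-1) ^ (Lr S le x z)) (Gd x z * G_poly (I z y) le))"

lemma mm_rev:
  assumes H: "x \<in> S" "y \<in> S" "le x y"
  shows "rev_poly (Lr S le x y) (mm x y) = mm x y"
proof -
  let ?K = "\<lambda>k. [:-1, 1::int:] ^ k"
  define T where "T = (\<lambda>z w v. smult ((-1) ^ (Lr S le x w) * (-1) ^ (Lr S le w z))
                        (?K (Lr S le w v) * (Gd x w * G_poly (I v y) le)))"
  have zI: "z \<in> S \<and> le x z \<and> le z y" if "z \<in> I x y" for z using that by (simp add: interval_def)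
  have "rev_poly (Lr S le x y) (mm x y) =
     (\<Sum>z\<in>I x y. rev_poly (Lr S le x y) (smult ((-1) ^ (Lr S le x z)) (Gd x z * G_poly (I z y) le)))"
    unfolding mm_def by (rule rev_poly_sum)
  also have "\<dots> = (\<Sum>z\<in>I x y. \<Sum>w\<in>I x z. \<Sum>v\<in>I z y. T z w v)"
  proof (rule sum.cong[OF refl])
    fix z assume z: "z \<in> I x y"
    have zz: "z \<in> S" "le x z" "le z y" using zI[OF z] by auto
    have "rev_poly (Lr S le x y) (smult ((-1) ^ (Lr S le x z)) (Gd x z * G_poly (I z y) le))
      = smult ((-1) ^ (Lr S le x z)) (rev_poly (Lr S le x z + Lr S le z y) (Gd x z * G_poly (I z y) le))"
      using Lr_add[OF H(1) zz(1) H(2) zz(2,3)] by (simp add: rev_poly_smult)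
    also have "\<dots> = smult ((-1) ^ (Lr S le x z)) (rev_poly (Lr S le x z) (Gd x z) * rev_poly (Lr S le z y) (G_poly (I z y) le))"
      using rev_poly_mult[OF Gd_deg[OF H(1) zz(1,2)] deg_G[OF zz(1) H(2) zz(3)]] by simp
    also have "\<dots> = smult ((-1) ^ (Lr S le x z)) ((\<Sum>w\<in>I x z. ?K (Lr S le w z) * Gd x w) * (\<Sum>v\<in>I z y. ?K (Lr S le z v) * G_poly (I v y) le))"
      unfolding Gd_kls[OF H(1) zz(1,2)] kls[OF zz(1) H(2) zz(3)] ..
    also have "\<dots> = (\<Sum>w\<in>I x z. \<Sum>v\<in>I z y. T z w v)"
      unfolding sum_product smult_sum_right
    proof (rule sum.cong[OF refl], rule sum.cong[OF refl])
      fix w v assume w: "w \<in> I x z" and v: "v \<in> I z y"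
      have ww: "w \<in> S" "le x w" "le w z" using w by (auto simp: interval_def)
      have vv: "v \<in> S" "le z v" "le v y" using v by (auto simp: interval_def)
      have e1: "Lr S le x z = Lr S le x w + Lr S le w z" by (rule Lr_add[OF H(1) ww(1) zz(1) ww(2,3)])
      have e2: "Lr S le w v = Lr S le w z + Lr S le z v" by (rule Lr_add[OF ww(1) zz(1) vv(1) ww(3) vv(2)])
      show "smult ((-1) ^ Lr S le x z) (?K (Lr S le w z) * Gd x w * (?K (Lr S le z v) * G_poly (I v y) le)) = T z w v"
        unfolding T_def e1 e2 by (simp add: power_add algebra_simps)
    qed
    finally show "rev_poly (Lr S le x y) (smult ((-1) ^ (Lr S le x z)) (Gd x z * G_poly (I z y) le))
      = (\<Sum>w\<in>I x z. \<Sum>v\<in>I z y. T z w v)" .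
  qed
  also have "\<dots> = (\<Sum>w\<in>I x y. \<Sum>z\<in>I w y. \<Sum>v\<in>I z y. T z w v)"
  proof -
    define F where "F = (\<lambda>z w. \<Sum>v\<in>I z y. T z w v)"
    have "(\<Sum>z\<in>I x y. \<Sum>w\<in>I x z. F z w) = (\<Sum>w\<in>I x y. \<Sum>z\<in>I w y. F z w)"
      unfolding I_set
    proof (rule sum_swap_cond[OF finS])
      fix z w assume zw: "z \<in> S" "w \<in> S"
      show "(le x z \<and> le z y) \<and> le x w \<and> le w z \<longleftrightarrow> (le x w \<and> le w y) \<and> le w z \<and> le z y"
      proof
        assume A: "(le x z \<and> le z y) \<and> le x w \<and> le w z"
        have "le w y" using ptrans[OF zw(2) zw(1) H(2)] A by blast
        then show "(le x w \<and> le w y) \<and> le w z \<and> le z y" using A by blast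
      next
        assume A: "(le x w \<and> le w y) \<and> le w z \<and> le z y"
        have "le x z" using ptrans[OF H(1) zw(2) zw(1)] A by blast
        then show "(le x z \<and> le z y) \<and> le x w \<and> le w z" using A by blast
      qed
    qed
    then show ?thesis unfolding F_def .
  qed
  also have "\<dots> = (\<Sum>w\<in>I x y. \<Sum>v\<in>I w y. \<Sum>z\<in>I w v. T z w v)"
  proof (rule sum.cong[OF refl])
    fix w assume w: "w \<in> I x y"
    have ww: "w \<in> S" "le x w" "le w y" using zI[OF w] by auto
    define F where "F = (\<lambda>z v. T z w v)"
    have "(\<Sum>z\<in>I w y. \<Sum>v\<in>I z y. F z v) = (\<Sum>v\<in>I w y. \<Sum>z\<in>I w v. F z v)"
      unfolding I_set
    proof (rule sum_swap_cond[OF finS])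
      fix z v assume zv: "z \<in> S" "v \<in> S"
      show "(le w z \<and> le z y) \<and> le z v \<and> le v y \<longleftrightarrow> (le w v \<and> le v y) \<and> le w z \<and> le z v"
      proof
        assume A: "(le w z \<and> le z y) \<and> le z v \<and> le v y"
        have "le w v" using ptrans[OF ww(1) zv(1) zv(2)] A by blast
        then show "(le w v \<and> le v y) \<and> le w z \<and> le z v" using A by blast
      next
        assume A: "(le w v \<and> le v y) \<and> le w z \<and> le z v"
        have "le z y" using ptrans[OF zv(1) zv(2) H(2)] A by blast
        then show "(le w z \<and> le z y) \<and> le z v \<and> le v y" using A by blast
      qed
    qed
    then show "(\<Sum>z\<in>I w y. \<Sum>v\<in>I z y. T z w v) = (\<Sum>v\<in>I w y. \<Sum>z\<in>I w v. T z w v)"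
      unfolding F_def .
  qed
  also have "\<dots> = (\<Sum>w\<in>I x y. smult ((-1) ^ (Lr S le x w)) (Gd x w * G_poly (I w y) le))"
  proof (rule sum.cong[OF refl])
    fix w assume w: "w \<in> I x y"
    have ww: "w \<in> S" "le x w" "le w y" using zI[OF w] by auto
    have "(\<Sum>v\<in>I w y. \<Sum>z\<in>I w v. T z w v) =
          (\<Sum>v\<in>I w y. smult ((-1) ^ (Lr S le x w) * (\<Sum>z\<in>I w v. (-1) ^ (Lr S le w z)))
                        (?K (Lr S le w v) * (Gd x w * G_poly (I v y) le)))"
      unfolding T_def smult_sum[symmetric] sum_distrib_left ..
    also have "\<dots> = (\<Sum>v\<in>I w y. if w = v then smult ((-1) ^ (Lr S le x w)) (?K (Lr S le w v) * (Gd x w * G_poly (I v y) le)) else 0)"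
    proof (rule sum.cong[OF refl])
      fix v assume v: "v \<in> I w y"
      have vv: "v \<in> S" "le w v" using v by (auto simp: interval_def)
      show "smult ((-1) ^ (Lr S le x w) * (\<Sum>z\<in>I w v. (-1) ^ (Lr S le w z))) (?K (Lr S le w v) * (Gd x w * G_poly (I v y) le))
          = (if w = v then smult ((-1) ^ (Lr S le x w)) (?K (Lr S le w v) * (Gd x w * G_poly (I v y) le)) else 0)"
        unfolding alt_delta[OF ww(1) vv(1,2)] by simp
    qed
    also have "\<dots> = smult ((-1) ^ (Lr S le x w)) (?K (Lr S le w w) * (Gd x w * G_poly (I w y) le))"
      using b_in_I[of w w] a_in_I[OF ww(1) H(2) ww(3)] finI by (simp add: sum.delta)
    also have "\<dots> = smult ((-1) ^ (Lr S le x w)) (Gd x w * G_poly (I w y) le)"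
      using Lr_refl[OF ww(1)] by simp
    finally show "(\<Sum>v\<in>I w y. \<Sum>z\<in>I w v. T z w v) = smult ((-1) ^ (Lr S le x w)) (Gd x w * G_poly (I w y) le)" .
  qed
  also have "\<dots> = mm x y" unfolding mm_def ..
  finally show ?thesis .
qed

lemma mm_deg:
  assumes H: "x \<in> S" "y \<in> S" "le x y" "x \<noteq> y"
  shows "2 * degree (mm x y) < Lr S le x y"
proof -
  let ?L = "Lr S le x y"
  have Lp: "?L > 0" using Lr_pos[OF H] .
  have "degree (mm x y) \<le> (?L - 1) div 2"
    unfolding mm_def
  proof (rule degree_sum_le[OF finI])
    fix z assume z: "z \<in> I x y"
    have zz: "z \<in> S" "le x z" "le z y" using z by (auto simp: interval_def)
    have "degree (smult ((-1) ^ (Lr S le x z)) (Gd x z * G_poly (I z y) le)) \<le> degree (Gd x z * G_poly (I z y) le)"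
      by (rule degree_smult_le)
    also have "\<dots> \<le> degree (Gd x z) + degree (G_poly (I z y) le)" by (rule degree_mult_le)
    also have "\<dots> \<le> (?L - 1) div 2"
    proof -
      have e: "?L = Lr S le x z + Lr S le z y" by (rule Lr_add[OF H(1) zz(1) H(2) zz(2,3)])
      have "2 * (degree (Gd x z) + degree (G_poly (I z y) le)) < ?L"
      proof (cases "z = x")
        case True
        then show ?thesis using Gd_one[OF H(1)] deg_G2[OF H] by simp
      next
        case False
        note zx = False
        show ?thesis
        proof (cases "z = y")
          case True
          then show ?thesis using G_one[OF H(2)] Gd_deg2[OF H] by simp
        next
          case False
          have "2 * degree (Gd x z) < Lr S le x z" using Gd_deg2[OF H(1) zz(1,2)] zx by auto
          moreover have "2 * degree (G_poly (I z y) le) < Lr S le z y" using deg_G2[OF zz(1) H(2) zz(3) False] .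
          ultimately show ?thesis using e by simp
        qed
      qed
      then show ?thesis by simp
    qed
    finally show "degree (smult ((-1) ^ (Lr S le x z)) (Gd x z * G_poly (I z y) le)) \<le> (?L - 1) div 2" .
  qed
  then show ?thesis using Lp by simp
qed

lemma inversion:
  assumes H: "x \<in> S" "y \<in> S" "le x y" "x \<noteq> y"
  shows "mm x y = 0"
  by (rule rev_fixed_zero[OF mm_rev[OF H(1-3)] mm_deg[OF H]])

end


lemma ev_neg1_pow: "ev t (smult ((-1) ^ k) p) = (-1) ^ k * ev t p"
  by (simp add: ev_smult)

lemma pow_identity1:
  assumes "(u::real) \<noteq> 0"
  shows "(-1) ^ a * (-u) ^ b = (-u) ^ (a + b) * (1 / u) ^ a"
proof -
  have m: "(-u) * (1 / u) = -1" using assms by simp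
  have "(-u) ^ (a + b) * (1 / u) ^ a = ((-u) ^ a * (1 / u) ^ a) * (-u) ^ b"
    by (simp only: power_add mult_ac)
  also have "(-u) ^ a * (1 / u) ^ a = ((-u) * (1 / u)) ^ a" by (rule power_mult_distrib[symmetric])
  also have "\<dots> = (-1) ^ a" unfolding m ..
  finally show ?thesis by (rule sym)
qed

lemma pow_identity2: "(-(u::real)) ^ a * u ^ b = u ^ (a + b) * (-1) ^ a"
  unfolding power_minus[of u a] by (simp only: power_add mult_ac)

context gp begin

lemma I_mono: "le z y \<Longrightarrow> w \<in> S \<Longrightarrow> z \<in> S \<Longrightarrow> y \<in> S \<Longrightarrow> I w z \<subseteq> I w y"
proof
  fix t assume "le z y" "w \<in> S" "z \<in> S" "y \<in> S" "t \<in> I w z"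
  then show "t \<in> I w y" using ptrans[of t z y] by (auto simp: interval_def)
qed

lemma BR:
  assumes H: "a \<in> S" "b \<in> S" "le a b"
  shows "(\<Sum>z\<in>I a b. B_val (I a z) le u v * u ^ (Lr S le z b) * ev (v / u) (G_poly (I z b) le))
         = ev (u * v) (G_poly (I a b) le)"
proof (cases "a = b")
  case True
  then show ?thesis using I_single[OF H(1)] B_one[OF H(1)] G_one[OF H(1)] Lr_refl[OF H(1)] by simp
next
  case False
  show ?thesis
    unfolding sum_split_b[OF H] B_rec[OF H False]
    using G_one[OF H(2)] Lr_refl[OF H(2)] by simp
qed

end

context eul begin

lemma BDR:
  assumes H: "a \<in> S" "b \<in> S" "le a b"
  shows "(\<Sum>z\<in>I a b. (1 / u) ^ (Lr S le a z) * ev (u * v) (Gd a z) * B_val (I z b) (dual_rel le) (1 / u) v)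
         = ev (v / u) (Gd a b)"
proof -
  have d: "dual_rel le b a" using H(3) by (simp add: dual_rel_def)
  have R: "(\<Sum>z\<in>interval S (dual_rel le) b a. B_val (interval S (dual_rel le) b z) (dual_rel le) (1 / u) v
      * (1 / u) ^ (Lr S (dual_rel le) z a) * ev (v / (1 / u)) (G_poly (interval S (dual_rel le) z a) (dual_rel le)))
      = ev (1 / u * v) (G_poly (interval S (dual_rel le) b a) (dual_rel le))"
    by (rule gp.BR[OF gp_dual H(2,1) d])
  have e1: "v / (1 / u) = u * v" by simp
  have e2: "1 / u * v = v / u" by simp
  from R show ?thesis
    unfolding interval_dual Lr_dual e1 e2 by (simp add: mult.commute mult.left_commute)
qed

lemma main_B:
  assumes u: "u \<noteq> 0"
  shows "\<forall>x y. x \<in> S \<longrightarrow> y \<in> S \<longrightarrow> le x y \<longrightarrow> card (I x y) \<le> n \<longrightarrow>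
     B_val (I x y) le u v = (-u) ^ (Lr S le x y) * B_val (I x y) (dual_rel le) (1 / u) v"
proof (induction n)
  case 0
  then show ?case using card_I_pos by fastforce
next
  case (Suc n)
  let ?bv = "\<lambda>a b. B_val (I a b) le u v"
  let ?bd = "\<lambda>a b. B_val (I a b) (dual_rel le) (1 / u) v"
  let ?beta = "\<lambda>a b. (-u) ^ (Lr S le a b) * ?bd a b"
  let ?A = "\<lambda>z b. u ^ (Lr S le z b) * ev (v / u) (G_poly (I z b) le)"
  let ?C = "\<lambda>a b. ev (u * v) (G_poly (I a b) le)"
  let ?PA = "\<lambda>a w. (-1) ^ (Lr S le a w) * ev (u * v) (Gd a w)"
  show ?case
  proof (intro allI impI)
    fix x y assume H: "x \<in> S" "y \<in> S" "le x y" "card (I x y) \<le> Suc n"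
    have IH: "?bv a b = ?beta a b" if "a \<in> S" "b \<in> S" "le a b" "card (I a b) < card (I x y)" for a b
      using Suc.IH that H(4) by auto
    show "?bv x y = ?beta x y"
    proof (cases "x = y")
      case True
      then show ?thesis using B_one[OF H(1)] gp.B_one[OF gp_dual H(1)] Lr_refl[OF H(1)]
        by (simp add: interval_dual)
    next
      case False
      note xy = False
      have zI: "z \<in> S \<and> le x z \<and> le z y" if "z \<in> I x y" for z using that by (simp add: interval_def)
      define T where "T = (\<Sum>w\<in>I x y. \<Sum>z\<in>I w y. ?PA x w * ?beta w z * ?A z y)"
      define X where "X = (\<Sum>z\<in>I x y. ?beta x z * ?A z y)"
      have T1: "T = 0"
      proof -
        have "T = (\<Sum>z\<in>I x y. \<Sum>w\<in>I x z. ?PA x w * ?beta w z * ?A z y)"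
        proof -
          define F where "F = (\<lambda>w z. ?PA x w * ?beta w z * ?A z y)"
          have "(\<Sum>w\<in>I x y. \<Sum>z\<in>I w y. F w z) = (\<Sum>z\<in>I x y. \<Sum>w\<in>I x z. F w z)"
            unfolding I_set
          proof (rule sum_swap_cond[OF finS])
            fix w z assume wz: "w \<in> S" "z \<in> S"
            show "(le x w \<and> le w y) \<and> le w z \<and> le z y \<longleftrightarrow> (le x z \<and> le z y) \<and> le x w \<and> le w z"
            proof
              assume A: "(le x w \<and> le w y) \<and> le w z \<and> le z y"
              have "le x z" using ptrans[OF H(1) wz(1) wz(2)] A by blast
              then show "(le x z \<and> le z y) \<and> le x w \<and> le w z" using A by blast
            next
              assume A: "(le x z \<and> le z y) \<and> le x w \<and> le w z"
              have "le w y" using ptrans[OF wz(1) wz(2) H(2)] A by blast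
              then show "(le x w \<and> le w y) \<and> le w z \<and> le z y" using A by blast
            qed
          qed
          then show ?thesis unfolding T_def F_def .
        qed
        also have "\<dots> = (\<Sum>z\<in>I x y. (-u) ^ (Lr S le x z) * ev (v / u) (Gd x z) * ?A z y)"
        proof (rule sum.cong[OF refl])
          fix z assume z: "z \<in> I x y"
          have zz: "z \<in> S" "le x z" "le z y" using zI[OF z] by auto
          have "(\<Sum>w\<in>I x z. ?PA x w * ?beta w z * ?A z y)
              = (\<Sum>w\<in>I x z. (-u) ^ (Lr S le x z) * ((1 / u) ^ (Lr S le x w) * ev (u * v) (Gd x w) * ?bd w z)) * ?A z y"
            unfolding sum_distrib_right
          proof (rule sum.cong[OF refl])
            fix w assume w: "w \<in> I x z"
            have ww: "w \<in> S" "le x w" "le w z" using w by (auto simp: interval_def)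
            have e: "Lr S le x z = Lr S le x w + Lr S le w z" by (rule Lr_add[OF H(1) ww(1) zz(1) ww(2,3)])
            show "?PA x w * ?beta w z * ?A z y =
                  (-u) ^ (Lr S le x z) * ((1 / u) ^ (Lr S le x w) * ev (u * v) (Gd x w) * ?bd w z) * ?A z y"
              unfolding e using pow_identity1[OF u, of "Lr S le x w" "Lr S le w z"]
              by (simp add: algebra_simps)
          qed
          also have "\<dots> = (-u) ^ (Lr S le x z) * ev (v / u) (Gd x z) * ?A z y"
            unfolding sum_distrib_left[symmetric] BDR[OF H(1) zz(1,2)] ..
          finally show "(\<Sum>w\<in>I x z. ?PA x w * ?beta w z * ?A z y) = (-u) ^ (Lr S le x z) * ev (v / u) (Gd x z) * ?A z y" .
        qed
        also have "\<dots> = u ^ (Lr S le x y) * ev (v / u) (mm x y)"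
          unfolding mm_def ev_sum sum_distrib_left
        proof (rule sum.cong[OF refl])
          fix z assume z: "z \<in> I x y"
          have zz: "z \<in> S" "le x z" "le z y" using zI[OF z] by auto
          have e: "Lr S le x y = Lr S le x z + Lr S le z y" by (rule Lr_add[OF H(1) zz(1) H(2) zz(2,3)])
          show "(-u) ^ (Lr S le x z) * ev (v / u) (Gd x z) * ?A z y =
               u ^ (Lr S le x y) * ev (v / u) (smult ((-1) ^ (Lr S le x z)) (Gd x z * G_poly (I z y) le))"
            unfolding e ev_smult ev_mult using pow_identity2[of u "Lr S le x z" "Lr S le z y"]
            by (simp add: algebra_simps)
        qed
        also have "\<dots> = 0" using inversion[OF H(1-3) xy] by simp
        finally show ?thesis .
      qed
      have T2: "T = X - ?C x y"
      proof -
        have inner: "(\<Sum>z\<in>I w y. ?beta w z * ?A z y) = ?C w y"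
          if w: "w \<in> {w\<in>I x y. w \<noteq> x}" for w
        proof -
          have ww: "w \<in> S" "le x w" "le w y" "w \<noteq> x" using w by (auto simp: interval_def)
          have "(\<Sum>z\<in>I w y. ?beta w z * ?A z y) = (\<Sum>z\<in>I w y. ?bv w z * ?A z y)"
          proof (rule sum.cong[OF refl])
            fix z assume z: "z \<in> I w y"
            have zz: "z \<in> S" "le w z" "le z y" using z by (auto simp: interval_def)
            have "card (I w z) \<le> card (I w y)" by (rule card_mono[OF finI I_mono[OF zz(3) ww(1) zz(1) H(2)]])
            moreover have "card (I w y) < card (I x y)"
              by (rule card_lt1[OF H(1,2) ww(1) ww(2,3)]) (use ww in auto)
            ultimately have "?bv w z = ?beta w z" using IH[OF ww(1) zz(1,2)] by simp
            then show "?beta w z * ?A z y = ?bv w z * ?A z y" by simp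
          qed
          also have "\<dots> = ?C w y" using BR[OF ww(1) H(2) ww(3)] by (simp add: mult.assoc)
          finally show ?thesis .
        qed
        have PAx: "?PA x x = 1" using Lr_refl[OF H(1)] Gd_one[OF H(1)] by simp
        have "T = (\<Sum>w\<in>I x y. ?PA x w * (\<Sum>z\<in>I w y. ?beta w z * ?A z y))"
          unfolding T_def sum_distrib_left by (simp add: mult.assoc)
        also have "\<dots> = X + (\<Sum>w\<in>{w\<in>I x y. w \<noteq> x}. ?PA x w * ?C w y)"
          unfolding sum_split_a[OF H(1-3)] PAx X_def using inner by simp
        also have "(\<Sum>w\<in>{w\<in>I x y. w \<noteq> x}. ?PA x w * ?C w y) = - ?C x y"
        proof -
          have "ev (u * v) (mm x y) = 0" using inversion[OF H(1-3) xy] by simp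
          moreover have "ev (u * v) (mm x y) = (\<Sum>w\<in>I x y. ?PA x w * ?C w y)"
            unfolding mm_def ev_sum ev_smult ev_mult by (simp add: mult.assoc)
          ultimately have "(\<Sum>w\<in>I x y. ?PA x w * ?C w y) = 0" by simp
          then show ?thesis unfolding sum_split_a[OF H(1-3)] PAx by simp
        qed
        finally show ?thesis by simp
      qed
      have XC: "X = ?C x y" using T1 T2 by simp
      have br: "?bv x y + (\<Sum>z\<in>{z\<in>I x y. z \<noteq> y}. ?bv x z * ?A z y) = ?C x y"
        using BR[OF H(1-3), of u v] unfolding sum_split_b[OF H(1-3)]
        using G_one[OF H(2)] Lr_refl[OF H(2)] by (simp add: mult.assoc)
      have "?bv x y = ?C x y - (\<Sum>z\<in>{z\<in>I x y. z \<noteq> y}. ?bv x z * ?A z y)"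
        using br by (simp add: eq_diff_eq)
      also have "(\<Sum>z\<in>{z\<in>I x y. z \<noteq> y}. ?bv x z * ?A z y) = (\<Sum>z\<in>{z\<in>I x y. z \<noteq> y}. ?beta x z * ?A z y)"
      proof (rule sum.cong[OF refl])
        fix z assume z: "z \<in> {z\<in>I x y. z \<noteq> y}"
        have zz: "z \<in> S" "le x z" "le z y" "z \<noteq> y" using z by (auto simp: interval_def)
        have "card (I x z) < card (I x y)" by (rule card_lt2[OF H(1,2) zz(1) zz(2,3)]) (use zz in auto)
        then show "?bv x z * ?A z y = ?beta x z * ?A z y" using IH[OF H(1) zz(1,2)] by simp
      qed
      also have "?C x y - \<dots> = ?beta x y"
        using XC unfolding X_def sum_split_b[OF H(1-3)] using G_one[OF H(2)] Lr_refl[OF H(2)] by simp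
      finally show ?thesis .
    qed
  qed
qed

end


context gp begin

lemma mob_fuel_aux:
  "\<forall>x y. x \<in> S \<longrightarrow> y \<in> S \<longrightarrow> le x y \<longrightarrow> card (I x y) \<le> m \<longrightarrow>
     mob_aux m S le x y = mob_aux (card (I x y)) S le x y"
proof (induction m rule: less_induct)
  case (less m)
  show ?case
  proof (intro allI impI)
    fix x y assume H: "x \<in> S" "y \<in> S" "le x y" "card (I x y) \<le> m"
    obtain k where k: "card (I x y) = Suc k" using card_I_pos[OF H(1-3)] gr0_implies_Suc by blast
    obtain m' where m: "m = Suc m'" using H(4) k by (cases m) auto
    have eqS: "(\<Sum>z\<in>{z \<in> S. le x z \<and> le z y \<and> z \<noteq> y}. mob_aux m' S le x z)
             = (\<Sum>z\<in>{z \<in> S. le x z \<and> le z y \<and> z \<noteq> y}. mob_aux k S le x z)"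
    proof (rule sum.cong[OF refl])
      fix z assume "z \<in> {z \<in> S. le x z \<and> le z y \<and> z \<noteq> y}"
      then have z: "z \<in> S" "le x z" "le z y" "z \<noteq> y" by auto
      have lt: "card (I x z) < card (I x y)" by (rule card_lt2[OF H(1,2) z(1) z(2,3)]) (use z in auto)
      have "mob_aux m' S le x z = mob_aux (card (I x z)) S le x z"
        using less.IH[of m'] m lt k H(4) z H(1) by auto
      moreover have "mob_aux k S le x z = mob_aux (card (I x z)) S le x z"
        using less.IH[of k] m lt k H(4) z H(1) by auto
      ultimately show "mob_aux m' S le x z = mob_aux k S le x z" by simp
    qed
    show "mob_aux m S le x y = mob_aux (card (I x y)) S le x y"
      by (simp only: m k mob_aux.simps eqS)
  qed
qed

lemma mob_rec:
  assumes H: "x \<in> S" "y \<in> S" "le x y" "x \<noteq> y"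
  shows "mobius S le x y = - (\<Sum>z\<in>{z\<in>I x y. z \<noteq> y}. mobius S le x z)"
proof -
  have cS: "card (I x y) \<le> card S" by (rule card_mono[OF finS I_sub])
  obtain n where n: "card S = Suc n" using card_I_pos[OF H(1-3)] cS by (cases "card S") auto
  have "mobius S le x y = - (\<Sum>z\<in>{z \<in> S. le x z \<and> le z y \<and> z \<noteq> y}. mob_aux n S le x z)"
    unfolding mobius_def n using H(3,4) by simp
  also have "(\<Sum>z\<in>{z \<in> S. le x z \<and> le z y \<and> z \<noteq> y}. mob_aux n S le x z)
      = (\<Sum>z\<in>{z\<in>I x y. z \<noteq> y}. mobius S le x z)"
    unfolding I_filter
  proof (rule sum.cong[OF refl])
    fix z assume "z \<in> {z \<in> S. le x z \<and> le z y \<and> z \<noteq> y}"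
    then have z: "z \<in> S" "le x z" "le z y" "z \<noteq> y" by auto
    have lt: "card (I x z) < card (I x y)" by (rule card_lt2[OF H(1,2) z(1) z(2,3)]) (use z in auto)
    have "mob_aux n S le x z = mob_aux (card (I x z)) S le x z"
      using mob_fuel_aux[of n] lt cS n z H(1) by auto
    moreover have "mob_aux (card S) S le x z = mob_aux (card (I x z)) S le x z"
      using mob_fuel_aux[of "card S"] lt cS n z H(1) by auto
    ultimately show "mob_aux n S le x z = mobius S le x z" unfolding mobius_def by simp
  qed
  finally show ?thesis .
qed

end

lemma eulerian_eul:
  assumes E: "eulerian S le"
  shows "eul S le"
proof -
  have G: "gp S le"
    using E unfolding eulerian_def gp_def by blast
  interpret gp S le by (rule G)
  have mobE: "\<forall>x\<in>S. \<forall>y\<in>S. le x y \<longrightarrow> mobius S le x y = (-1) ^ (rho S le y - rho S le x)"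
    using E unfolding eulerian_def by blast
  have A: "(\<Sum>z\<in>interval S le x y. (-1::int) ^ (Lr S le x z)) = 0"
    if H: "x \<in> S" "y \<in> S" "le x y" "x \<noteq> y" for x y
  proof -
    have "(\<Sum>z\<in>I x y. (-1::int) ^ (Lr S le x z)) = (\<Sum>z\<in>I x y. mobius S le x z)"
    proof (rule sum.cong[OF refl])
      fix z assume "z \<in> I x y"
      then have z: "z \<in> S" "le x z" by (auto simp: interval_def)
      have "Lr S le (pbot S le) z = Lr S le (pbot S le) x + Lr S le x z"
        using zero Lr_add[of "pbot S le" x z] H(1) z by blast
      then have "rho S le z - rho S le x = Lr S le x z" unfolding rho_S by simp
      then show "(-1::int) ^ (Lr S le x z) = mobius S le x z" using mobE H(1) z by simp
    qed
    also have "\<dots> = 0"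
      unfolding sum_split_b[OF H(1-3)] mob_rec[OF H] by simp
    finally show ?thesis .
  qed
  show ?thesis
    unfolding eul_def eul_axioms_def using G A by blast
qed

theorem theorem2p13:
  fixes S :: "'a set" and le :: "'a \<Rightarrow> 'a \<Rightarrow> bool" and d :: nat
  assumes "eulerian S le"
    and "prank S le = d"
  shows "\<forall>u v :: real. u \<noteq> 0 \<longrightarrow>
           B_val S le u v = (- u) ^ d * B_val S (dual_rel le) (1 / u) v"
proof (intro allI impI)
  fix u v :: real assume u: "u \<noteq> 0"
  interpret eul S le by (rule eulerian_eul[OF assms(1)])
  let ?z = "pbot S le" and ?o = "ptop S le"
  have M: "\<forall>x y. x \<in> S \<longrightarrow> y \<in> S \<longrightarrow> le x y \<longrightarrow> card (I x y) \<le> card S \<longrightarrow>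
     B_val (I x y) le u v = (-u) ^ (Lr S le x y) * B_val (I x y) (dual_rel le) (1 / u) v"
    by (rule main_B[OF u])
  have zo: "?z \<in> S" "?o \<in> S" "le ?z ?o" using zero one by auto
  have "B_val (I ?z ?o) le u v = (-u) ^ (Lr S le ?z ?o) * B_val (I ?z ?o) (dual_rel le) (1 / u) v"
  proof -
    have cS: "card (I ?z ?o) \<le> card S" by (rule card_mono[OF finS I_sub])
    show ?thesis by (rule M[rule_format, OF zo cS])
  qed
  moreover have "d = Lr S le ?z ?o" using assms(2) unfolding prank_def rho_S by simp
  ultimately show "B_val S le u v = (- u) ^ d * B_val S (dual_rel le) (1 / u) v"
    unfolding I_S by simp
qed



end
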